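(* Let $G$ be a connected groupoid with finite object set $G_0=\{e_1,\dots,e_r\}$, $A=\bigoplus_{i=1}^r A_i$ a unital ring with $A_i:=A_{e_i}\neq 0$ having identity $1_i$, and $\alpha=(A_g,\alpha_g)_{g\in G}$ a unital global action of $G$ on $A$. The following are equivalent: (i) $A\subset A\star_\alpha G$ is a separable extension; (ii) $G$ is finite and there exists $a\in C(A)$ such that $t_i(a)=1_i$ for all $i=1,\dots,r$.
   Context: A groupoid $G$ is a small category in which every morphism is invertible; $G_0$ is its object set (objects identified with identity morphisms), $s,t$ source and target; $gh$ is defined iff $s(g)=t(h)$; $G(e,f)$ is the set of morphisms from $e$ to $f$; $G$ is connected if $G(e,f)\neq\emptyset$ for all $e,f\in G_0$. A unital partial action of $G$ on $A$ is a family $\alpha=(A_g,\alpha_g)_{g\in G}$ where $A_{t(g)}$ is a two-sided ideal of $A$, $A_g=A1_g$ is a two-sided ideal of $A_{t(g)}$ with $1_g$ a central idempotent of $A$, $\alpha_g:A_{g^{-1}}\to A_g$ a ring isomorphism, such that $\alpha_e=\mathrm{id}_{A_e}$ for $e\in G_0$, $\alpha_h^{-1}(A_{g^{-1}}\cap A_h)\subseteq A_{(gh)^{-1}}$ and $\alpha_g(\alpha_h(x))=\alpha_{gh}(x)$ for $x\in\alpha_h^{-1}(A_{g^{-1}}\cap A_h)$, whenever $s(g)=t(h)$. It is global if $\alpha_g\alpha_h=\alpha_{gh}$ for all composable $g,h$; equivalently $A_g=A_{t(g)}$ for all $g\in G$. The skew groupoid ring $A\star_\alpha G=\bigoplus_{g\in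 G}A_g\delta_g$ has multiplication $(a_g\delta_g)(b_h\delta_h)=\alpha_g(\alpha_{g^{-1}}(a_g)b_h)\delta_{gh}$ if $s(g)=t(h)$ and $0$ otherwise; it is unital with $1=\sum_{e\in G_0}1_e\delta_e$, and $A$ is regarded as a subring via $a\mapsto\sum_{e\in G_0}(a1_e)\delta_e$. For finite $G$, trace maps: $t_{i,j}(a)=\sum_{g\in G(e_i,e_j)}\alpha_g(a1_{g^{-1}})$ and $t_j(a)=\sum_{i=1}^r t_{i,j}(a)$. $C(A)$ is the center of $A$. A ring extension $R\subseteq S$ is separable if the multiplication map $S\otimes_R S\to S$ splits as a map of $(S,S)$-bimodules; equivalently there exists $x\in S\otimes_R S$ with $m(x)=1_S$ and $sx=xs$ for all $s\in S$. *)

theory Defs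
  imports "HOL-Algebra.Ring"
begin

text \<open>A groupoid is given by its set of morphisms Gm, its set of objects G0
  (identified with identity morphisms), source and target maps, a composition
  cmp g h (meaning g after h, defined when src g = tgt h) and an inversion.\<close>

definition groupoid ::
  "'g set \<Rightarrow> 'g set \<Rightarrow> ('g \<Rightarrow> 'g) \<Rightarrow> ('g \<Rightarrow> 'g) \<Rightarrow> ('g \<Rightarrow> 'g \<Rightarrow> 'g) \<Rightarrow> ('g \<Rightarrow> 'g) \<Rightarrow> bool"
where
  "groupoid Gm G0 src tgt cmp gi \<longleftrightarrow>
     G0 \<subseteq> Gm \<and>
     (\<forall>g\<in>Gm. src g \<in> G0 \<and> tgt g \<in> G0) \<and>
     (\<forall>e\<in>G0. src e = e \<and> tgt e = e) \<and>
     (\<forall>g\<in>Gm. \<forall>h\<in>Gm. src g = tgt h \<longrightarrow>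
        cmp g h \<in> Gm \<and> src (cmp g h) = src h \<and> tgt (cmp g h) = tgt g) \<and>
     (\<forall>g\<in>Gm. \<forall>h\<in>Gm. \<forall>k\<in>Gm. src g = tgt h \<longrightarrow> src h = tgt k \<longrightarrow>
        cmp (cmp g h) k = cmp g (cmp h k)) \<and>
     (\<forall>g\<in>Gm. cmp (tgt g) g = g \<and> cmp g (src g) = g) \<and>
     (\<forall>g\<in>Gm. gi g \<in> Gm \<and> src (gi g) = tgt g \<and> tgt (gi g) = src g \<and>
        cmp g (gi g) = tgt g \<and> cmp (gi g) g = src g)"

definition hom_set :: "'g set \<Rightarrow> ('g \<Rightarrow> 'g) \<Rightarrow> ('g \<Rightarrow> 'g) \<Rightarrow> 'g \<Rightarrow> 'g \<Rightarrow> 'g set" where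
  "hom_set Gm src tgt e f = {g \<in> Gm. src g = e \<and> tgt g = f}"

definition groupoid_connected :: "'g set \<Rightarrow> 'g set \<Rightarrow> ('g \<Rightarrow> 'g) \<Rightarrow> ('g \<Rightarrow> 'g) \<Rightarrow> bool" where
  "groupoid_connected Gm G0 src tgt \<longleftrightarrow> (\<forall>e\<in>G0. \<forall>f\<in>G0. hom_set Gm src tgt e f \<noteq> {})"

definition central :: "'a::ring_1 \<Rightarrow> bool" where
  "central c \<longleftrightarrow> (\<forall>b. c * b = b * c)"

text \<open>The ideal A_g = A 1_g, where u g is the central idempotent 1_g.\<close>
definition ideal_of :: "('g \<Rightarrow> 'a::ring_1) \<Rightarrow> 'g \<Rightarrow> 'a set" where
  "ideal_of u g = {a * u g | a. True}"

definition ring_iso_betw :: "('a::ring_1 \<Rightarrow> 'a) \<Rightarrow> 'a set \<Rightarrow> 'a set \<Rightarrow> bool" where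
  "ring_iso_betw f X Y \<longleftrightarrow> bij_betw f X Y \<and>
     (\<forall>x\<in>X. \<forall>y\<in>X. f (x + y) = f x + f y \<and> f (x * y) = f x * f y)"

definition unital_partial_action ::
  "'g set \<Rightarrow> 'g set \<Rightarrow> ('g \<Rightarrow> 'g) \<Rightarrow> ('g \<Rightarrow> 'g) \<Rightarrow> ('g \<Rightarrow> 'g \<Rightarrow> 'g) \<Rightarrow> ('g \<Rightarrow> 'g)
   \<Rightarrow> ('g \<Rightarrow> 'a::ring_1) \<Rightarrow> ('g \<Rightarrow> 'a \<Rightarrow> 'a) \<Rightarrow> bool"
where
  "unital_partial_action Gm G0 src tgt cmp gi u \<alpha> \<longleftrightarrow>
     (\<forall>g\<in>Gm. central (u g) \<and> u g * u g = u g) \<and>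
     (\<forall>g\<in>Gm. ideal_of u g \<subseteq> ideal_of u (tgt g)) \<and>
     (\<forall>g\<in>Gm. ring_iso_betw (\<alpha> g) (ideal_of u (gi g)) (ideal_of u g)) \<and>
     (\<forall>e\<in>G0. \<forall>x\<in>ideal_of u e. \<alpha> e x = x) \<and>
     (\<forall>g\<in>Gm. \<forall>h\<in>Gm. src g = tgt h \<longrightarrow>
        (\<forall>x\<in>ideal_of u (gi h). \<alpha> h x \<in> ideal_of u (gi g) \<inter> ideal_of u h \<longrightarrow>
           x \<in> ideal_of u (gi (cmp g h)) \<and> \<alpha> g (\<alpha> h x) = \<alpha> (cmp g h) x))"

definition unital_global_action ::
  "'g set \<Rightarrow> 'g set \<Rightarrow> ('g \<Rightarrow> 'g) \<Rightarrow> ('g \<Rightarrow> 'g) \<Rightarrow> ('g \<Rightarrow> 'g \<Rightarrow> 'g) \<Rightarrow> ('g \<Rightarrow> 'g)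
   \<Rightarrow> ('g \<Rightarrow> 'a::ring_1) \<Rightarrow> ('g \<Rightarrow> 'a \<Rightarrow> 'a) \<Rightarrow> bool"
where
  "unital_global_action Gm G0 src tgt cmp gi u \<alpha> \<longleftrightarrow>
     unital_partial_action Gm G0 src tgt cmp gi u \<alpha> \<and>
     (\<forall>g\<in>Gm. ideal_of u g = ideal_of u (tgt g))"

text \<open>Elements are finitely supported functions f on morphisms with f g in A_g,
  i.e. the formal sums of f g delta_g.\<close>
definition skew_carrier :: "'g set \<Rightarrow> ('g \<Rightarrow> 'a::ring_1) \<Rightarrow> ('g \<Rightarrow> 'a) set" where
  "skew_carrier Gm u = {f. finite {g. f g \<noteq> 0} \<and> (\<forall>g. f g \<noteq> 0 \<longrightarrow> g \<in> Gm) \<and>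
                            (\<forall>g\<in>Gm. f g \<in> ideal_of u g)}"

definition skew_mult ::
  "'g set \<Rightarrow> ('g \<Rightarrow> 'g) \<Rightarrow> ('g \<Rightarrow> 'g) \<Rightarrow> ('g \<Rightarrow> 'g \<Rightarrow> 'g) \<Rightarrow> ('g \<Rightarrow> 'g)
   \<Rightarrow> ('g \<Rightarrow> 'a \<Rightarrow> 'a) \<Rightarrow> ('g \<Rightarrow> 'a::ring_1) \<Rightarrow> ('g \<Rightarrow> 'a) \<Rightarrow> ('g \<Rightarrow> 'a)"
where
  "skew_mult Gm src tgt cmp gi \<alpha> f f' = (\<lambda>k.
     \<Sum>(g, h) \<in> {(g, h). g \<in> Gm \<and> h \<in> Gm \<and> f g \<noteq> 0 \<and> f' h \<noteq> 0 \<and>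
                        src g = tgt h \<and> cmp g h = k}.
        \<alpha> g (\<alpha> (gi g) (f g) * f' h))"

definition skew_groupoid_ring ::
  "'g set \<Rightarrow> 'g set \<Rightarrow> ('g \<Rightarrow> 'g) \<Rightarrow> ('g \<Rightarrow> 'g) \<Rightarrow> ('g \<Rightarrow> 'g \<Rightarrow> 'g) \<Rightarrow> ('g \<Rightarrow> 'g)
   \<Rightarrow> ('g \<Rightarrow> 'a::ring_1) \<Rightarrow> ('g \<Rightarrow> 'a \<Rightarrow> 'a) \<Rightarrow> ('g \<Rightarrow> 'a) ring"
where
  "skew_groupoid_ring Gm G0 src tgt cmp gi u \<alpha> =
     \<lparr> carrier = skew_carrier Gm u,
       monoid.mult = skew_mult Gm src tgt cmp gi \<alpha>,
       one = (\<lambda>g. if g \<in> G0 then u g else 0),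
       zero = (\<lambda>g. 0),
       add = (\<lambda>f f' g. f g + f' g) \<rparr>"

text \<open>A regarded as a subring: a maps to the sum over objects e of (a 1_e) delta_e.\<close>
definition skew_embed :: "'g set \<Rightarrow> ('g \<Rightarrow> 'a::ring_1) \<Rightarrow> 'a \<Rightarrow> ('g \<Rightarrow> 'a)" where
  "skew_embed G0 u a = (\<lambda>g. if g \<in> G0 then a * u g else 0)"

text \<open>The tensor product S (x)_R S is the free abelian group on S x S
  (finitely supported integer-valued functions on pairs) modulo the subgroup
  generated by the biadditivity and R-balancedness relations.\<close>

definition single :: "'x \<Rightarrow> ('x \<Rightarrow> int)" where
  "single p = (\<lambda>q. if q = p then 1 else 0)"

inductive_set tensor_rel :: "('b, 'm) ring_scheme \<Rightarrow> 'b set \<Rightarrow> ('b \<times> 'b \<Rightarrow> int) set"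
  for S :: "('b, 'm) ring_scheme" and R :: "'b set"
where
  tr_zero: "(\<lambda>p. 0) \<in> tensor_rel S R"
| tr_add: "x \<in> tensor_rel S R \<Longrightarrow> y \<in> tensor_rel S R \<Longrightarrow> (\<lambda>p. x p + y p) \<in> tensor_rel S R"
| tr_neg: "x \<in> tensor_rel S R \<Longrightarrow> (\<lambda>p. - x p) \<in> tensor_rel S R"
| tr_addl: "u \<in> carrier S \<Longrightarrow> u' \<in> carrier S \<Longrightarrow> v \<in> carrier S \<Longrightarrow>
    (\<lambda>p. single (u \<oplus>\<^bsub>S\<^esub> u', v) p - single (u, v) p - single (u', v) p) \<in> tensor_rel S R"
| tr_addr: "u \<in> carrier S \<Longrightarrow> v \<in> carrier S \<Longrightarrow> v' \<in> carrier S \<Longrightarrow>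
    (\<lambda>p. single (u, v \<oplus>\<^bsub>S\<^esub> v') p - single (u, v) p - single (u, v') p) \<in> tensor_rel S R"
| tr_bal: "u \<in> carrier S \<Longrightarrow> v \<in> carrier S \<Longrightarrow> r \<in> R \<Longrightarrow>
    (\<lambda>p. single (u \<otimes>\<^bsub>S\<^esub> r, v) p - single (u, r \<otimes>\<^bsub>S\<^esub> v) p) \<in> tensor_rel S R"

definition formal_sums :: "('b, 'm) ring_scheme \<Rightarrow> ('b \<times> 'b \<Rightarrow> int) set" where
  "formal_sums S = {x. finite {p. x p \<noteq> 0} \<and> {p. x p \<noteq> 0} \<subseteq> carrier S \<times> carrier S}"

definition fs_map :: "('b \<times> 'b \<Rightarrow> 'b \<times> 'b) \<Rightarrow> ('b \<times> 'b \<Rightarrow> int) \<Rightarrow> ('b \<times> 'b \<Rightarrow> int)" where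
  "fs_map \<phi> x = (\<lambda>p. \<Sum>q\<in>{q. x q \<noteq> 0 \<and> \<phi> q = p}. x q)"

definition tensor_mult :: "('b, 'm) ring_scheme \<Rightarrow> ('b \<times> 'b \<Rightarrow> int) \<Rightarrow> 'b" where
  "tensor_mult S x = (\<Oplus>\<^bsub>S\<^esub> p\<in>{p. x p \<noteq> 0}. add_pow S (x p) (fst p \<otimes>\<^bsub>S\<^esub> snd p))"

text \<open>R \<subseteq> S is separable iff there is x in S (x)_R S with m(x) = 1 and
  s x = x s for all s in S.\<close>
definition separable_extension :: "('b, 'm) ring_scheme \<Rightarrow> 'b set \<Rightarrow> bool" where
  "separable_extension S R \<longleftrightarrow>
     (\<exists>x\<in>formal_sums S. tensor_mult S x = \<one>\<^bsub>S\<^esub> \<and>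
        (\<forall>s\<in>carrier S.
           (\<lambda>p. fs_map (\<lambda>(a, b). (s \<otimes>\<^bsub>S\<^esub> a, b)) x p - fs_map (\<lambda>(a, b). (a, b \<otimes>\<^bsub>S\<^esub> s)) x p)
             \<in> tensor_rel S R))"

definition trace_map ::
  "'g set \<Rightarrow> 'g set \<Rightarrow> ('g \<Rightarrow> 'g) \<Rightarrow> ('g \<Rightarrow> 'g) \<Rightarrow> ('g \<Rightarrow> 'g) \<Rightarrow> ('g \<Rightarrow> 'a::ring_1)
   \<Rightarrow> ('g \<Rightarrow> 'a \<Rightarrow> 'a) \<Rightarrow> 'g \<Rightarrow> 'a \<Rightarrow> 'a"
where
  "trace_map Gm G0 src tgt gi u \<alpha> ej a =
     (\<Sum>ei\<in>G0. \<Sum>g\<in>hom_set Gm src tgt ei ej. \<alpha> g (a * u (gi g)))"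

end

theory Submission imports Defs begin


definition SumS :: "('x \<Rightarrow> int) \<Rightarrow> ('x \<Rightarrow> 'b::ring_1) \<Rightarrow> 'b" where
  "SumS x h = (\<Sum>p\<in>{p. x p \<noteq> 0}. of_int (x p) * h p)"

abbreviation fins :: "('x \<Rightarrow> int) \<Rightarrow> bool" where "fins x \<equiv> finite {p. x p \<noteq> 0}"

lemma SumS_superset: assumes "finite A" "{p. x p \<noteq> 0} \<subseteq> A"
  shows "SumS x h = (\<Sum>p\<in>A. of_int (x p) * h p)"
  unfolding SumS_def by (rule sum.mono_neutral_left) (use assms in auto)

lemma fins_add: "fins x \<Longrightarrow> fins y \<Longrightarrow> fins (\<lambda>p. x p + y p)"
  by (rule finite_subset[of _ "{p. x p \<noteq> 0} \<union> {p. y p \<noteq> 0}"]) auto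
lemma fins_neg: "fins x \<Longrightarrow> fins (\<lambda>p. - x p)" by simp
lemma fins_single: "fins (single q)" unfolding single_def by simp
lemma fins_zero: "fins (\<lambda>p. 0)" by simp

lemma SumS_add: assumes "fins x" "fins y" shows "SumS (\<lambda>p. x p + y p) h = SumS x h + SumS y h"
proof -
  let ?A = "{p. x p \<noteq> 0} \<union> {p. y p \<noteq> 0}"
  have f: "finite ?A" using assms by simp
  have "SumS (\<lambda>p. x p + y p) h = (\<Sum>p\<in>?A. of_int (x p + y p) * h p)"
    by (rule SumS_superset[OF f]) auto
  also have "\<dots> = (\<Sum>p\<in>?A. of_int (x p) * h p) + (\<Sum>p\<in>?A. of_int (y p) * h p)"
    by (simp add: distrib_right sum.distrib)
  also have "\<dots> = SumS x h + SumS y h"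
    using SumS_superset[OF f, of x h] SumS_superset[OF f, of y h] by auto
  finally show ?thesis .
qed

lemma SumS_neg: "SumS (\<lambda>p. - x p) h = - SumS x h"
  unfolding SumS_def by (simp add: sum_negf)

lemma SumS_zero: "SumS (\<lambda>p. 0) h = 0" unfolding SumS_def by simp

lemma SumS_single: "SumS (single q) h = h q"
proof -
  have "{p. single q p \<noteq> 0} = {q}" unfolding single_def by auto
  thus ?thesis unfolding SumS_def by (simp add: single_def)
qed

lemma SumS_diff: assumes "fins x" "fins y" shows "SumS (\<lambda>p. x p - y p) h = SumS x h - SumS y h"
  using SumS_add[OF assms(1) fins_neg[OF assms(2)], of h] SumS_neg[of y h] by simp

lemma fins_diff: "fins x \<Longrightarrow> fins y \<Longrightarrow> fins (\<lambda>p. x p - y p)"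
  by (rule finite_subset[of _ "{p. x p \<noteq> 0} \<union> {p. y p \<noteq> 0}"]) auto

lemma SumS_two: "SumS (\<lambda>p. single a p - single b p) h = h a - h b"
  using SumS_diff[OF fins_single fins_single] by (simp add: SumS_single)

lemma fins_two: "fins (\<lambda>p. single a p - single b p)"
  by (rule fins_diff[OF fins_single fins_single])

lemma fins_three: "fins (\<lambda>p. single a p - single b p - single c p)"
  by (rule fins_diff[OF fins_two fins_single])

lemma SumS_three: "SumS (\<lambda>p. single a p - single b p - single c p) h = h a - h b - h c"
proof -
  have "SumS (\<lambda>p. single a p - single b p - single c p) h = SumS (\<lambda>p. single a p - single b p) h - SumS (single c) h"
    by (rule SumS_diff[OF fins_two fins_single])
  thus ?thesis by (simp add: SumS_two SumS_single)
qed

lemma fins_sum: "fins (\<lambda>p. \<Sum>g\<in>I. F g p)" if "\<And>g. g \<in> I \<Longrightarrow> fins (F g)"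
  using that
proof (induction I rule: infinite_finite_induct)
  case (insert x J) thus ?case using fins_add[of "F x"] by simp
qed simp_all

lemma SumS_sum: assumes "\<And>g. g \<in> I \<Longrightarrow> fins (F g)"
  shows "SumS (\<lambda>p. \<Sum>g\<in>I. F g p) h = (\<Sum>g\<in>I. SumS (F g) h)"
  using assms
proof (induction I rule: infinite_finite_induct)
  case (insert x I)
  have "SumS (\<lambda>p. \<Sum>g\<in>insert x I. F g p) h = SumS (\<lambda>p. F x p + (\<Sum>g\<in>I. F g p)) h"
    using insert by simp
  also have "\<dots> = SumS (F x) h + SumS (\<lambda>p. \<Sum>g\<in>I. F g p) h"
    by (rule SumS_add) (auto intro!: fins_sum insert.prems)
  finally show ?case using insert by simp
qed (simp_all add: SumS_zero)

lemma fs_map_SumS: assumes "fins x" shows "fs_map \<phi> x p = SumS x (\<lambda>q. if \<phi> q = p then 1 else 0)"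
proof -
  have "fs_map \<phi> x p = (\<Sum>q\<in>{q \<in> {q. x q \<noteq> 0}. \<phi> q = p}. x q)"
    unfolding fs_map_def by (rule sum.cong) auto
  also have "\<dots> = (\<Sum>q\<in>{q. x q \<noteq> 0}. if \<phi> q = p then x q else 0)"
    by (rule sum.inter_filter[OF assms])
  also have "\<dots> = SumS x (\<lambda>q. if \<phi> q = p then 1 else 0)"
    unfolding SumS_def by (rule sum.cong) auto
  finally show ?thesis .
qed

lemma fins_fs_map: assumes "fins x" shows "fins (fs_map \<phi> x)"
proof (rule finite_subset[of _ "\<phi> ` {p. x p \<noteq> 0}"])
  show "{p. fs_map \<phi> x p \<noteq> 0} \<subseteq> \<phi> ` {p. x p \<noteq> 0}"
  proof
    fix p assume "p \<in> {p. fs_map \<phi> x p \<noteq> 0}"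
    hence "{q. x q \<noteq> 0 \<and> \<phi> q = p} \<noteq> {}" unfolding fs_map_def by force
    thus "p \<in> \<phi> ` {p. x p \<noteq> 0}" by blast
  qed
qed (use assms in simp)

lemma fs_map_sum_single: assumes "finite I"
  shows "fs_map \<phi> (\<lambda>p. \<Sum>g\<in>I. single (P g) p) = (\<lambda>p. \<Sum>g\<in>I. single (\<phi> (P g)) p)"
proof
  fix p
  have "fs_map \<phi> (\<lambda>p. \<Sum>g\<in>I. single (P g) p) p = SumS (\<lambda>p. \<Sum>g\<in>I. single (P g) p) (\<lambda>q. if \<phi> q = p then 1 else 0)"
    by (rule fs_map_SumS) (rule fins_sum, rule fins_single)
  also have "\<dots> = (\<Sum>g\<in>I. SumS (single (P g)) (\<lambda>q. if \<phi> q = p then 1 else 0))"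
    by (rule SumS_sum) (rule fins_single)
  also have "\<dots> = (\<Sum>g\<in>I. single (\<phi> (P g)) p)"
    by (rule sum.cong[OF refl]) (simp only: SumS_single, simp add: single_def eq_commute)
  finally show "fs_map \<phi> (\<lambda>p. \<Sum>g\<in>I. single (P g) p) p = (\<Sum>g\<in>I. single (\<phi> (P g)) p)" .
qed

lemma SumS_fs_map: assumes "fins x" shows "SumS (fs_map \<phi> x) h = SumS x (\<lambda>q. h (\<phi> q))"
proof -
  let ?A = "\<phi> ` {p. x p \<noteq> 0}"
  have fA: "finite ?A" using assms by simp
  have sub: "{p. fs_map \<phi> x p \<noteq> 0} \<subseteq> ?A"
  proof
    fix p assume "p \<in> {p. fs_map \<phi> x p \<noteq> 0}"
    hence "{q. x q \<noteq> 0 \<and> \<phi> q = p} \<noteq> {}" unfolding fs_map_def by force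
    thus "p \<in> ?A" by blast
  qed
  have "SumS (fs_map \<phi> x) h = (\<Sum>p\<in>?A. of_int (fs_map \<phi> x p) * h p)"
    by (rule SumS_superset[OF fA sub])
  also have "\<dots> = (\<Sum>p\<in>?A. (\<Sum>q\<in>{q. q \<in> {q. x q \<noteq> 0} \<and> \<phi> q = p}. of_int (x q) * h (\<phi> q)))"
    unfolding fs_map_def by (rule sum.cong) (auto simp: sum_distrib_right intro!: sum.cong)
  also have "\<dots> = (\<Sum>q\<in>{q. x q \<noteq> 0}. of_int (x q) * h (\<phi> q))"
    by (rule sum.group) (use assms in auto)
  finally show ?thesis unfolding SumS_def .
qed

lemma SumS_cong: "(\<And>p. x p \<noteq> 0 \<Longrightarrow> h1 p = h2 p) \<Longrightarrow> SumS x h1 = SumS x h2"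
  unfolding SumS_def by (rule sum.cong) auto

lemma SumS_swap: "SumS x (\<lambda>p. \<Sum>g\<in>G. H g p) = (\<Sum>g\<in>G. SumS x (H g))"
  unfolding SumS_def by (simp add: sum_distrib_left sum.swap[of _ G])

lemma SumS_mult_left: "SumS x (\<lambda>p. b * H p) = b * SumS x H"
  unfolding SumS_def sum_distrib_left
  by (rule sum.cong[OF refl]) (metis mult.assoc mult_of_int_commute)

lemma SumS_mult_right: "SumS x (\<lambda>p. H p * b) = SumS x H * b"
  unfolding SumS_def by (simp add: sum_distrib_right mult.assoc)

lemma SumS_sum_single: assumes "finite I"
  shows "SumS (\<lambda>p. \<Sum>g\<in>I. single (P g) p) h = (\<Sum>g\<in>I. h (P g))"
  by (subst SumS_sum) (auto simp: fins_single SumS_single)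

locale setting =
  fixes Gm G0 :: "'g set"
    and src tgt gi :: "'g \<Rightarrow> 'g"
    and cmp :: "'g \<Rightarrow> 'g \<Rightarrow> 'g"
    and u :: "'g \<Rightarrow> 'a::ring_1"
    and \<alpha> :: "'g \<Rightarrow> 'a \<Rightarrow> 'a"
  assumes grp: "groupoid Gm G0 src tgt cmp gi"
    and conn: "groupoid_connected Gm G0 src tgt"
    and finG0: "finite G0"
    and act: "unital_global_action Gm G0 src tgt cmp gi u \<alpha>"
    and sum1: "(\<Sum>e\<in>G0. u e) = 1"
    and orth: "\<forall>e\<in>G0. \<forall>f\<in>G0. e \<noteq> f \<longrightarrow> u e * u f = 0"
    and nz: "\<forall>e\<in>G0. u e \<noteq> 0"
begin

lemma G0_sub: "e \<in> G0 \<Longrightarrow> e \<in> Gm" using grp unfolding groupoid_def by blast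
lemma src_G0[simp]: "g \<in> Gm \<Longrightarrow> src g \<in> G0" using grp unfolding groupoid_def by blast
lemma tgt_G0[simp]: "g \<in> Gm \<Longrightarrow> tgt g \<in> G0" using grp unfolding groupoid_def by blast
lemma src_Gm[simp]: "g \<in> Gm \<Longrightarrow> src g \<in> Gm" using G0_sub by simp
lemma tgt_Gm[simp]: "g \<in> Gm \<Longrightarrow> tgt g \<in> Gm" using G0_sub by simp
lemma src_obj[simp]: "e \<in> G0 \<Longrightarrow> src e = e" using grp unfolding groupoid_def by blast
lemma tgt_obj[simp]: "e \<in> G0 \<Longrightarrow> tgt e = e" using grp unfolding groupoid_def by blast
lemma cmp_Gm[simp]: "g \<in> Gm \<Longrightarrow> h \<in> Gm \<Longrightarrow> src g = tgt h \<Longrightarrow> cmp g h \<in> Gm"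
  using grp unfolding groupoid_def by blast
lemma src_cmp[simp]: "g \<in> Gm \<Longrightarrow> h \<in> Gm \<Longrightarrow> src g = tgt h \<Longrightarrow> src (cmp g h) = src h"
  using grp unfolding groupoid_def by blast
lemma tgt_cmp[simp]: "g \<in> Gm \<Longrightarrow> h \<in> Gm \<Longrightarrow> src g = tgt h \<Longrightarrow> tgt (cmp g h) = tgt g"
  using grp unfolding groupoid_def by blast
lemma cmp_assoc: "g \<in> Gm \<Longrightarrow> h \<in> Gm \<Longrightarrow> k \<in> Gm \<Longrightarrow> src g = tgt h \<Longrightarrow> src h = tgt k \<Longrightarrow>
    cmp (cmp g h) k = cmp g (cmp h k)"
  using grp unfolding groupoid_def by blast
lemma cmp_tgt[simp]: "g \<in> Gm \<Longrightarrow> cmp (tgt g) g = g" using grp unfolding groupoid_def by blast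
lemma cmp_src[simp]: "g \<in> Gm \<Longrightarrow> cmp g (src g) = g" using grp unfolding groupoid_def by blast
lemma gi_Gm[simp]: "g \<in> Gm \<Longrightarrow> gi g \<in> Gm" using grp unfolding groupoid_def by blast
lemma src_gi[simp]: "g \<in> Gm \<Longrightarrow> src (gi g) = tgt g" using grp unfolding groupoid_def by blast
lemma tgt_gi[simp]: "g \<in> Gm \<Longrightarrow> tgt (gi g) = src g" using grp unfolding groupoid_def by blast
lemma cmp_gi_r[simp]: "g \<in> Gm \<Longrightarrow> cmp g (gi g) = tgt g" using grp unfolding groupoid_def by blast
lemma cmp_gi_l[simp]: "g \<in> Gm \<Longrightarrow> cmp (gi g) g = src g" using grp unfolding groupoid_def by blast

lemma cancel_l: assumes k: "k \<in> Gm" and g: "g \<in> Gm" and h: "h \<in> Gm" and kg: "src k = tgt g" and kh: "src k = tgt h"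
  and e: "cmp k g = cmp k h" shows "g = h"
proof -
  have 1: "cmp (gi k) (cmp k g) = cmp (cmp (gi k) k) g"
    by (rule cmp_assoc[symmetric]) (simp_all add: k g kg)
  have 2: "cmp (gi k) (cmp k h) = cmp (cmp (gi k) k) h"
    by (rule cmp_assoc[symmetric]) (simp_all add: k h kh)
  have 3: "cmp (cmp (gi k) k) g = g" using cmp_gi_l[OF k] kg cmp_tgt[OF g] by simp
  have 4: "cmp (cmp (gi k) k) h = h" using cmp_gi_l[OF k] kh cmp_tgt[OF h] by simp
  show ?thesis using 1 2 3 4 e by metis
qed

lemma cancel_r: assumes k: "k \<in> Gm" and g: "g \<in> Gm" and h: "h \<in> Gm" and kg: "src g = tgt k" and kh: "src h = tgt k"
  and e: "cmp g k = cmp h k" shows "g = h"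
proof -
  have 1: "cmp (cmp g k) (gi k) = cmp g (cmp k (gi k))"
    by (rule cmp_assoc) (simp_all add: k g kg)
  have 2: "cmp (cmp h k) (gi k) = cmp h (cmp k (gi k))"
    by (rule cmp_assoc) (simp_all add: k h kh)
  have 3: "cmp g (cmp k (gi k)) = g" using cmp_gi_r[OF k] kg cmp_src[OF g] by simp
  have 4: "cmp h (cmp k (gi k)) = h" using cmp_gi_r[OF k] kh cmp_src[OF h] by simp
  show ?thesis using 1 2 3 4 e by metis
qed

lemma gi_gi[simp]: assumes g: "g \<in> Gm" shows "gi (gi g) = g"
proof (rule cancel_r[of "gi g"])
  show "cmp (gi (gi g)) (gi g) = cmp g (gi g)"
    using cmp_gi_l[of "gi g"] cmp_gi_r[OF g] g src_gi[of "gi g"] by simp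
qed (simp_all add: g)

lemma gi_obj[simp]: assumes e0: "e \<in> G0" shows "gi e = e"
proof -
  have e: "e \<in> Gm" using G0_sub e0 .
  show ?thesis
  proof (rule cancel_r[of e])
    show "cmp (gi e) e = cmp e e" using cmp_gi_l[OF e] cmp_src[OF e] src_obj[OF e0] by simp
  qed (simp_all add: e e0)
qed

lemma cmp_obj_l[simp]: "h \<in> Gm \<Longrightarrow> e = tgt h \<Longrightarrow> cmp e h = h" by simp
lemma cmp_obj_r[simp]: "h \<in> Gm \<Longrightarrow> e = src h \<Longrightarrow> cmp h e = h" by simp

lemma gi_cmp: assumes g: "g \<in> Gm" and h: "h \<in> Gm" and gh: "src g = tgt h" shows "gi (cmp g h) = cmp (gi h) (gi g)"
proof (rule cancel_r[of "cmp g h"])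
  have c: "cmp g h \<in> Gm" using g h gh by simp
  have 1: "cmp (cmp (gi h) (gi g)) (cmp g h) = cmp (gi h) (cmp (gi g) (cmp g h))"
    by (rule cmp_assoc) (simp_all add: g h gh)
  have 2: "cmp (gi g) (cmp g h) = cmp (cmp (gi g) g) h"
    by (rule cmp_assoc[symmetric]) (simp_all add: g h gh)
  have 3: "cmp (cmp (gi g) g) h = h" using cmp_gi_l[OF g] gh cmp_tgt[OF h] by simp
  have 4: "cmp (gi h) h = src h" using h by simp
  have 5: "cmp (gi (cmp g h)) (cmp g h) = src h" using cmp_gi_l[OF c] src_cmp[OF g h gh] by simp
  show "cmp (gi (cmp g h)) (cmp g h) = cmp (cmp (gi h) (gi g)) (cmp g h)" using 1 2 3 4 5 by simp
  show "cmp g h \<in> Gm" "gi (cmp g h) \<in> Gm" using c by simp_all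
  show "cmp (gi h) (gi g) \<in> Gm" using g h gh by simp
  show "src (gi (cmp g h)) = tgt (cmp g h)" using c by simp
  show "src (cmp (gi h) (gi g)) = tgt (cmp g h)" using g h gh by simp
qed

lemma cmp_in_G0: assumes g: "g \<in> Gm" and h: "h \<in> Gm" and gh: "src g = tgt h" and o: "cmp g h \<in> G0" shows "h = gi g"
proof (rule cancel_l[of g])
  have "cmp g h = tgt (cmp g h)" using tgt_obj[OF o] by simp
  also have "\<dots> = tgt g" using tgt_cmp[OF g h gh] .
  finally show "cmp g h = cmp g (gi g)" using cmp_gi_r[OF g] by simp
qed (simp_all add: g h gh)

lemma central_comm: "central c \<Longrightarrow> c * b = b * c" unfolding central_def by blast

lemma upa: "unital_partial_action Gm G0 src tgt cmp gi u \<alpha>"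
  using act unfolding unital_global_action_def by blast

lemma u_central: "g \<in> Gm \<Longrightarrow> u g * b = b * u g"
  using upa unfolding unital_partial_action_def central_def by blast
lemma u_idem: "g \<in> Gm \<Longrightarrow> u g * u g = u g"
  using upa unfolding unital_partial_action_def by blast

lemma ideal_glob: "g \<in> Gm \<Longrightarrow> ideal_of u g = ideal_of u (tgt g)"
  using act unfolding unital_global_action_def by blast

lemma mem_ideal_raw: "g \<in> Gm \<Longrightarrow> x \<in> ideal_of u g \<longleftrightarrow> x * u g = x"
proof
  assume g: "g \<in> Gm" and "x \<in> ideal_of u g"
  then obtain a where "x = a * u g" unfolding ideal_of_def by blast
  thus "x * u g = x" using u_idem[OF g] by (simp add: mult.assoc)
next
  assume "x * u g = x" thus "x \<in> ideal_of u g" unfolding ideal_of_def by (metis (mono_tags, lifting) mem_Collect_eq)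
qed

lemma u_tgt: assumes "g \<in> Gm" shows "u g = u (tgt g)"
proof -
  have "u g \<in> ideal_of u g" unfolding ideal_of_def by (metis (mono_tags, lifting) mem_Collect_eq mult_1_left)
  hence "u g \<in> ideal_of u (tgt g)" using ideal_glob[OF assms] by simp
  hence 1: "u g * u (tgt g) = u g" using mem_ideal_raw assms by simp
  have "u (tgt g) \<in> ideal_of u (tgt g)" unfolding ideal_of_def by (metis (mono_tags, lifting) mem_Collect_eq mult_1_left)
  hence "u (tgt g) \<in> ideal_of u g" using ideal_glob[OF assms] by simp
  hence 2: "u (tgt g) * u g = u (tgt g)" using mem_ideal_raw assms by simp
  show ?thesis using 1 2 u_central[OF assms] by metis
qed

lemma u_gi: "g \<in> Gm \<Longrightarrow> u (gi g) = u (src g)"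
  using u_tgt[of "gi g"] tgt_gi[of g] gi_Gm[of g] by metis

lemma mem_I: "g \<in> Gm \<Longrightarrow> x \<in> ideal_of u g \<longleftrightarrow> x * u (tgt g) = x"
  using mem_ideal_raw[of g x] u_tgt[of g] by simp

lemma mem_I_gi: "g \<in> Gm \<Longrightarrow> x \<in> ideal_of u (gi g) \<longleftrightarrow> x * u (src g) = x"
  using mem_I[of "gi g"] by simp

lemma uo_central: "e \<in> G0 \<Longrightarrow> u e * b = b * u e" using u_central G0_sub by blast
lemma uo_idem: "e \<in> G0 \<Longrightarrow> u e * u e = u e" using u_idem G0_sub by blast

lemma iso: "g \<in> Gm \<Longrightarrow> ring_iso_betw (\<alpha> g) (ideal_of u (gi g)) (ideal_of u g)"
  using upa unfolding unital_partial_action_def by blast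

lemma al_add: "g \<in> Gm \<Longrightarrow> x \<in> ideal_of u (gi g) \<Longrightarrow> y \<in> ideal_of u (gi g) \<Longrightarrow>
   \<alpha> g (x + y) = \<alpha> g x + \<alpha> g y"
  using iso unfolding ring_iso_betw_def by blast
lemma al_mult: "g \<in> Gm \<Longrightarrow> x \<in> ideal_of u (gi g) \<Longrightarrow> y \<in> ideal_of u (gi g) \<Longrightarrow>
   \<alpha> g (x * y) = \<alpha> g x * \<alpha> g y"
  using iso unfolding ring_iso_betw_def by blast
lemma al_in: "g \<in> Gm \<Longrightarrow> x \<in> ideal_of u (gi g) \<Longrightarrow> \<alpha> g x \<in> ideal_of u g"
  using iso unfolding ring_iso_betw_def bij_betw_def by blast

lemma al_obj: "e \<in> G0 \<Longrightarrow> x \<in> ideal_of u e \<Longrightarrow> \<alpha> e x = x"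
  using upa unfolding unital_partial_action_def by blast

lemma al_comp: assumes "g \<in> Gm" "h \<in> Gm" "src g = tgt h" "x \<in> ideal_of u (gi h)"
  shows "\<alpha> g (\<alpha> h x) = \<alpha> (cmp g h) x"
proof -
  have "\<alpha> h x \<in> ideal_of u h" using al_in assms by blast
  moreover hence "\<alpha> h x \<in> ideal_of u (gi g)" using assms ideal_glob[of h] ideal_glob[of "gi g"] by simp
  ultimately show ?thesis using upa assms unfolding unital_partial_action_def by blast
qed

lemma al_inv: assumes "g \<in> Gm" "x \<in> ideal_of u g" shows "\<alpha> g (\<alpha> (gi g) x) = x"
proof -
  have "\<alpha> g (\<alpha> (gi g) x) = \<alpha> (cmp g (gi g)) x" using assms by (intro al_comp) auto
  also have "\<dots> = x" using assms al_obj[of "tgt g" x] ideal_glob[of g] by simp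
  finally show ?thesis .
qed

lemma al_inv': assumes "g \<in> Gm" "x \<in> ideal_of u (gi g)" shows "\<alpha> (gi g) (\<alpha> g x) = x"
  using al_inv[of "gi g" x] assms by simp

lemma I_zero: "g \<in> Gm \<Longrightarrow> 0 \<in> ideal_of u g" by (simp add: mem_I)
lemma I_add: "g \<in> Gm \<Longrightarrow> x \<in> ideal_of u g \<Longrightarrow> y \<in> ideal_of u g \<Longrightarrow> x + y \<in> ideal_of u g"
  by (simp add: mem_I distrib_right)
lemma I_neg: "g \<in> Gm \<Longrightarrow> x \<in> ideal_of u g \<Longrightarrow> - x \<in> ideal_of u g"
  by (simp add: mem_I)
lemma I_multl: "g \<in> Gm \<Longrightarrow> y \<in> ideal_of u g \<Longrightarrow> x * y \<in> ideal_of u g"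
  by (simp add: mem_I mult.assoc)
lemma I_multr: "g \<in> Gm \<Longrightarrow> x \<in> ideal_of u g \<Longrightarrow> x * y \<in> ideal_of u g"
  by (simp add: mem_I mult.assoc) (metis mult.assoc u_central tgt_Gm)
lemma I_sum: "g \<in> Gm \<Longrightarrow> (\<And>i. i \<in> A \<Longrightarrow> f i \<in> ideal_of u g) \<Longrightarrow> sum f A \<in> ideal_of u g"
  by (induction A rule: infinite_finite_induct) (auto simp: I_zero I_add)
lemma I_ofint: "g \<in> Gm \<Longrightarrow> x \<in> ideal_of u g \<Longrightarrow> of_int n * x \<in> ideal_of u g"
  by (rule I_multl)
lemma I_u: "g \<in> Gm \<Longrightarrow> u g \<in> ideal_of u g" by (simp add: mem_I u_tgt[symmetric] u_idem)

lemma al_zero: assumes "g \<in> Gm" shows "\<alpha> g 0 = 0"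
  using al_add[OF assms, of 0 0] I_zero[of "gi g"] assms by simp
lemma al_neg: assumes "g \<in> Gm" "x \<in> ideal_of u (gi g)" shows "\<alpha> g (- x) = - \<alpha> g x"
proof -
  have "\<alpha> g x + \<alpha> g (- x) = 0" using al_add[OF assms(1), of x "-x"] I_neg[of "gi g" x] assms al_zero by simp
  thus ?thesis by (metis neg_eq_iff_add_eq_0)
qed
lemma al_sum: assumes "g \<in> Gm" "\<And>i. i \<in> A \<Longrightarrow> f i \<in> ideal_of u (gi g)"
  shows "\<alpha> g (sum f A) = (\<Sum>i\<in>A. \<alpha> g (f i))"
  using assms(2)
proof (induction A rule: infinite_finite_induct)
  case (insert x F)
  thus ?case using assms(1) by (simp add: al_add I_sum)
qed (auto simp: al_zero assms)

lemma al_ofint: assumes "g \<in> Gm" "x \<in> ideal_of u (gi g)" shows "\<alpha> g (of_int n * x) = of_int n * \<alpha> g x"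
proof -
  have nat: "\<alpha> g (of_nat m * x) = of_nat m * \<alpha> g x" for m
    by (induction m) (auto simp: al_zero assms distrib_right al_add I_multl)
  show ?thesis
  proof (cases "n \<ge> 0")
    case True thus ?thesis using nat[of "nat n"] by simp
  next
    case False
    hence "of_int n * x = - (of_nat (nat (-n)) * x)" by simp
    thus ?thesis using nat[of "nat (-n)"] al_neg assms I_multl False by simp
  qed
qed

lemma al_u: assumes g: "g \<in> Gm" shows "\<alpha> g (u (gi g)) = u g"
proof -
  have ug: "u g \<in> ideal_of u g" using I_u g .
  have ugi: "u (gi g) \<in> ideal_of u (gi g)" using I_u g by simp
  have "u g \<in> \<alpha> g ` ideal_of u (gi g)"
    using iso[OF g] ug unfolding ring_iso_betw_def bij_betw_def by simp
  then obtain y where y: "y \<in> ideal_of u (gi g)" "\<alpha> g y = u g" by (metis imageE)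
  have "y * u (gi g) = y" using y(1) mem_ideal_raw[of "gi g" y] g by simp
  hence 1: "u g * \<alpha> g (u (gi g)) = u g" using al_mult[OF g y(1) ugi] y(2) by simp
  have 2: "\<alpha> g (u (gi g)) * u g = \<alpha> g (u (gi g))"
    using al_in[OF g ugi] mem_ideal_raw[of g] g by simp
  have 3: "u g * \<alpha> g (u (gi g)) = \<alpha> g (u (gi g)) * u g" using u_central[OF g] .
  show ?thesis using 1 2 3 by simp
qed

abbreviation "S \<equiv> skew_groupoid_ring Gm G0 src tgt cmp gi u \<alpha>"
abbreviation "car \<equiv> skew_carrier Gm u"
abbreviation "mul \<equiv> skew_mult Gm src tgt cmp gi \<alpha>"

definition T :: "('g \<Rightarrow> 'a) \<Rightarrow> ('g \<Rightarrow> 'a) \<Rightarrow> 'g \<Rightarrow> 'g \<Rightarrow> 'a" where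
  "T f f' g h = \<alpha> g (\<alpha> (gi g) (f g) * f' h)"

definition V :: "'g \<Rightarrow> ('g \<times> 'g) set" where
  "V k = {(g, h). g \<in> Gm \<and> h \<in> Gm \<and> src g = tgt h \<and> cmp g h = k}"

definition supp :: "('g \<Rightarrow> 'a) \<Rightarrow> 'g set" where "supp f = {g. f g \<noteq> 0}"

lemma car_iff: "f \<in> car \<longleftrightarrow> finite (supp f) \<and> (\<forall>g. f g \<noteq> 0 \<longrightarrow> g \<in> Gm) \<and> (\<forall>g\<in>Gm. f g \<in> ideal_of u g)"
  unfolding skew_carrier_def supp_def by simp

lemma carD: assumes "f \<in> car"
  shows "finite (supp f)" "\<And>g. g \<notin> Gm \<Longrightarrow> f g = 0" "\<And>g. g \<in> Gm \<Longrightarrow> f g \<in> ideal_of u g"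
  using assms unfolding car_iff by auto

lemma S_simps[simp]: "carrier S = car" "add S = (\<lambda>f f' g. f g + f' g)" "zero S = (\<lambda>g. 0)"
   "monoid.mult S = mul" "one S = (\<lambda>g. if g \<in> G0 then u g else 0)"
  unfolding skew_groupoid_ring_def by simp_all

lemma T_zero1: "g \<in> Gm \<Longrightarrow> f g = 0 \<Longrightarrow> T f f' g h = 0"
  unfolding T_def by (simp add: al_zero)
lemma T_zero2: "g \<in> Gm \<Longrightarrow> f' h = 0 \<Longrightarrow> T f f' g h = 0"
  unfolding T_def by (simp add: al_zero)

lemma T_in: assumes "g \<in> Gm" "f \<in> car" shows "T f f' g h \<in> ideal_of u g"
proof -
  have "f g \<in> ideal_of u (gi (gi g))" using carD(3)[OF assms(2) assms(1)] assms by simp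
  hence "\<alpha> (gi g) (f g) \<in> ideal_of u (gi g)" using al_in[of "gi g"] assms by simp
  hence "\<alpha> (gi g) (f g) * f' h \<in> ideal_of u (gi g)" using I_multr assms by simp
  thus ?thesis unfolding T_def using al_in assms by simp
qed

lemma mult_eq_sum:
  assumes f: "f \<in> car" and f': "f' \<in> car" and Q: "finite Q" "Q \<subseteq> V k"
    and P: "\<And>g h. g \<in> Gm \<Longrightarrow> h \<in> Gm \<Longrightarrow> f g \<noteq> 0 \<Longrightarrow> f' h \<noteq> 0 \<Longrightarrow> src g = tgt h \<Longrightarrow> cmp g h = k \<Longrightarrow> (g, h) \<in> Q"
  shows "mul f f' k = (\<Sum>(g, h)\<in>Q. T f f' g h)"
proof -
  let ?P = "{(g, h). g \<in> Gm \<and> h \<in> Gm \<and> f g \<noteq> 0 \<and> f' h \<noteq> 0 \<and> src g = tgt h \<and> cmp g h = k}"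
  have "mul f f' k = (\<Sum>(g, h)\<in>?P. T f f' g h)"
    unfolding skew_mult_def T_def by simp
  also have "\<dots> = (\<Sum>(g, h)\<in>Q. T f f' g h)"
  proof (rule sum.mono_neutral_left[OF Q(1)])
    show "?P \<subseteq> Q" using P by auto
    show "\<forall>i\<in>Q - ?P. (case i of (g, h) \<Rightarrow> T f f' g h) = 0"
      using Q(2) unfolding V_def by (auto simp: T_zero1 T_zero2)
  qed
  finally show ?thesis .
qed

lemma mult_car: assumes f: "f \<in> car" and f': "f' \<in> car" shows "mul f f' \<in> car"
proof -
  let ?P = "\<lambda>k. {(g, h). g \<in> Gm \<and> h \<in> Gm \<and> f g \<noteq> 0 \<and> f' h \<noteq> 0 \<and> src g = tgt h \<and> cmp g h = k}"
  have m: "mul f f' k = (\<Sum>(g, h)\<in>?P k. T f f' g h)" for k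
    unfolding skew_mult_def T_def by simp
  have sub: "?P k \<subseteq> supp f \<times> supp f'" for k unfolding supp_def by auto
  have fin: "finite (supp f \<times> supp f')" using carD(1) f f' by simp
  have "supp (mul f f') \<subseteq> (\<lambda>(g, h). cmp g h) ` (supp f \<times> supp f')"
  proof
    fix k assume "k \<in> supp (mul f f')"
    hence "?P k \<noteq> {}" unfolding supp_def using m[of k] by force
    then obtain g h where "(g, h) \<in> ?P k" by auto
    thus "k \<in> (\<lambda>(g, h). cmp g h) ` (supp f \<times> supp f')" using sub[of k] by force
  qed
  hence 1: "finite (supp (mul f f'))" using fin finite_surj by blast
  have 2: "mul f f' k = 0" if "k \<notin> Gm" for k
  proof -
    have e: "?P k = {}" using that by auto
    show ?thesis using m[of k] by (simp only: e sum.empty)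
  qed
  have 3: "mul f f' k \<in> ideal_of u k" if k: "k \<in> Gm" for k
    unfolding m
  proof (rule I_sum[OF k], clarsimp)
    fix g h assume gh: "g \<in> Gm" "h \<in> Gm" "src g = tgt h" "k = cmp g h"
    have "T f f' g h \<in> ideal_of u g" using T_in gh f by simp
    thus "T f f' g h \<in> ideal_of u (cmp g h)" using gh by (simp add: mem_I)
  qed
  show ?thesis unfolding car_iff using 1 2 3 by blast
qed

lemma car_add: "f \<in> car \<Longrightarrow> f' \<in> car \<Longrightarrow> (\<lambda>g. f g + f' g) \<in> car"
proof -
  assume f: "f \<in> car" and f': "f' \<in> car"
  have "supp (\<lambda>g. f g + f' g) \<subseteq> supp f \<union> supp f'" unfolding supp_def by auto
  moreover have "g \<in> Gm" if "f g + f' g \<noteq> 0" for g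
    using that carD(2)[OF f, of g] carD(2)[OF f', of g] by force
  ultimately show ?thesis using f f' unfolding car_iff by (auto intro: finite_subset simp: I_add)
qed

lemma car_neg: "f \<in> car \<Longrightarrow> (\<lambda>g. - f g) \<in> car"
  unfolding car_iff supp_def by (auto simp: I_neg)

lemma car_zero: "(\<lambda>g. 0) \<in> car"
  unfolding car_iff supp_def by (auto simp: I_zero)

lemma abS: "abelian_group S"
  by (rule abelian_groupI) (auto simp: car_add car_zero algebra_simps intro!: bexI[OF _ car_neg])

lemma finsum_eval: assumes "finite A" "\<And>i. i \<in> A \<Longrightarrow> F i \<in> car"
  shows "finsum S F A k = (\<Sum>i\<in>A. F i k)"
proof -
  interpret ab: abelian_group S by (rule abS)
  show ?thesis using assms
  proof (induction A rule: finite_induct)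
    case empty
    then show ?case by simp
  next
    case (insert x A)
    have "finsum S F (insert x A) = add S (F x) (finsum S F A)"
      using ab.finsum_insert[of A x F] insert by (simp add: Pi_def)
    then show ?case using insert by simp
  qed
qed

lemma addpow_eval: assumes "y \<in> car" shows "add_pow S (n::int) y k = of_int n * y k"
proof -
  interpret ab: abelian_group S by (rule abS)
  have nat: "add_pow S (m::nat) y k = of_nat m * y k" for m
    by (induction m) (auto simp: distrib_right)
  have natc: "add_pow S (m::nat) y \<in> car" for m using ab.add.nat_pow_closed assms by simp
  show ?thesis
  proof (cases "n \<ge> 0")
    case True thus ?thesis using nat[of "nat n"] add_pow_int_ge[of n S y] by simp
  next
    case False
    have "a_inv S (add_pow S (nat (-n)) y) = (\<lambda>g. - add_pow S (nat (-n)) y g)"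
      by (rule ab.minus_equality) (auto simp: natc car_neg)
    thus ?thesis using False nat[of "nat (-n)"] by (simp add: add_pow_int_lt)
  qed
qed


abbreviation "emb \<equiv> skew_embed G0 u"
abbreviation "R \<equiv> skew_embed G0 u ` UNIV"

lemma emb_car: "emb c \<in> car"
proof -
  have "supp (emb c) \<subseteq> G0" unfolding supp_def skew_embed_def by auto
  hence "finite (supp (emb c))" using finG0 finite_subset by blast
  moreover have "emb c g \<in> ideal_of u g" if "g \<in> Gm" for g
    using that unfolding skew_embed_def by (auto simp: I_zero mem_I mult.assoc uo_idem)
  ultimately show ?thesis unfolding car_iff skew_embed_def by (auto simp: G0_sub)
qed

lemma mul_zero_out: "f \<in> car \<Longrightarrow> f' \<in> car \<Longrightarrow> k \<notin> Gm \<Longrightarrow> mul f f' k = 0"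
  using mult_car carD(2) by blast

lemma mul_emb_l: assumes b: "b \<in> car" and h: "h \<in> Gm" shows "mul (emb c) b h = c * b h"
proof -
  let ?e = "tgt h"
  have e0: "?e \<in> G0" using h by simp
  have e: "?e \<in> Gm" using h by simp
  have "mul (emb c) b h = (\<Sum>(g1, h1)\<in>{(?e, h)}. T (emb c) b g1 h1)"
  proof (rule mult_eq_sum[OF emb_car b])
    show "{(?e, h)} \<subseteq> V h" unfolding V_def using h by simp
    fix g1 h1 assume *: "g1 \<in> Gm" "h1 \<in> Gm" "emb c g1 \<noteq> 0" "b h1 \<noteq> 0" "src g1 = tgt h1" "cmp g1 h1 = h"
    have g10: "g1 \<in> G0" using *(3) unfolding skew_embed_def by (auto split: if_splits)
    have "h1 = h" using *(6) *(5) src_obj[OF g10] cmp_obj_l[OF *(2)] by metis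
    moreover hence "g1 = ?e" using *(5) src_obj[OF g10] by simp
    ultimately show "(g1, h1) \<in> {(?e, h)}" by simp
  qed simp
  also have "\<dots> = T (emb c) b ?e h" by simp
  also have "\<dots> = c * b h"
  proof -
    have 1: "emb c ?e = c * u ?e" using e0 unfolding skew_embed_def by simp
    have 2: "c * u ?e \<in> ideal_of u ?e" using e by (simp add: mem_I mult.assoc uo_idem e0)
    have 3: "b h * u ?e = b h" using carD(3)[OF b h] mem_I h by simp
    have 4: "c * u ?e * b h = c * b h" using 3 uo_central[OF e0, of "b h"] by (simp add: mult.assoc)
    have 5: "c * b h \<in> ideal_of u ?e" using e e0 3 by (simp add: mem_I mult.assoc)
    show ?thesis unfolding T_def using 1 2 4 5 al_obj[OF e0] gi_obj[OF e0] by simp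
  qed
  finally show ?thesis .
qed

lemma mul_emb_r: assumes a: "a \<in> car" and g: "g \<in> Gm"
  shows "mul a (emb c) g = \<alpha> g (\<alpha> (gi g) (a g) * c)"
proof -
  let ?e = "src g"
  have e0: "?e \<in> G0" using g by simp
  have "mul a (emb c) g = (\<Sum>(g1, h1)\<in>{(g, ?e)}. T a (emb c) g1 h1)"
  proof (rule mult_eq_sum[OF a emb_car])
    show "{(g, ?e)} \<subseteq> V g" unfolding V_def using g by simp
    fix g1 h1 assume *: "g1 \<in> Gm" "h1 \<in> Gm" "a g1 \<noteq> 0" "emb c h1 \<noteq> 0" "src g1 = tgt h1" "cmp g1 h1 = g"
    have h10: "h1 \<in> G0" using *(4) unfolding skew_embed_def by (auto split: if_splits)
    have "cmp g1 h1 = g1" using *(5) tgt_obj[OF h10] cmp_obj_r[OF *(1)] by metis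
    hence "g1 = g" using *(6) by simp
    moreover hence "h1 = ?e" using *(5) tgt_obj[OF h10] by simp
    ultimately show "(g1, h1) \<in> {(g, ?e)}" by simp
  qed simp
  also have "\<dots> = T a (emb c) g ?e" by simp
  also have "\<dots> = \<alpha> g (\<alpha> (gi g) (a g) * c)"
  proof -
    have "a g \<in> ideal_of u (gi (gi g))" using carD(3)[OF a g] g by simp
    hence "\<alpha> (gi g) (a g) \<in> ideal_of u (gi g)" using al_in[of "gi g"] g by simp
    hence y: "\<alpha> (gi g) (a g) * u ?e = \<alpha> (gi g) (a g)" using mem_I_gi g by simp
    have "\<alpha> (gi g) (a g) * (c * u ?e) = \<alpha> (gi g) (a g) * c"
      using y uo_central[OF e0, of c] by (metis mult.assoc)
    thus ?thesis unfolding T_def skew_embed_def using e0 by simp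
  qed
  finally show ?thesis .
qed

definition F :: "'g \<Rightarrow> 'g \<Rightarrow> ('g \<Rightarrow> 'a) \<times> ('g \<Rightarrow> 'a) \<Rightarrow> 'a" where
  "F g h p = \<alpha> (gi g) (fst p g) * snd p h"

lemma rel_F: assumes "x \<in> tensor_rel S R" and g: "g \<in> Gm"
  shows "fins x \<and> SumS x (F g h) = 0"
  using assms(1)
proof (induction rule: tensor_rel.induct)
  case tr_zero thus ?case by (simp add: SumS_zero)
next
  case (tr_add x y) thus ?case using fins_add[of x y] SumS_add[of x y "F g h"] by simp
next
  case (tr_neg x) thus ?case using SumS_neg[of x "F g h"] by simp
next
  case (tr_addl a a' b)
  have I: "a g \<in> ideal_of u (gi (gi g))" "a' g \<in> ideal_of u (gi (gi g))"
    using carD(3) tr_addl g by auto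
  have "F g h ((\<lambda>k. a k + a' k), b) = F g h (a, b) + F g h (a', b)"
    unfolding F_def using al_add[of "gi g", OF _ I] g by (simp add: distrib_right)
  thus ?case by (intro conjI fins_three) (simp add: SumS_three)
next
  case (tr_addr a b b')
  have "F g h (a, (\<lambda>k. b k + b' k)) = F g h (a, b) + F g h (a, b')"
    unfolding F_def by (simp add: distrib_left)
  thus ?case by (intro conjI fins_three) (simp add: SumS_three)
next
  case (tr_bal a b r)
  then obtain c where r: "r = emb c" by blast
  have ag: "a g \<in> ideal_of u (gi (gi g))" using carD(3) tr_bal g by auto
  hence y: "\<alpha> (gi g) (a g) * c \<in> ideal_of u (gi g)" using al_in[of "gi g"] g I_multr by simp
  have 1: "F g h (mul a r, b) = \<alpha> (gi g) (a g) * c * b h"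
    unfolding F_def r using mul_emb_r[OF _ g] tr_bal al_inv'[OF g y] by simp
  have 2: "mul r b h = c * b h"
  proof (cases "h \<in> Gm")
    case True thus ?thesis using mul_emb_l tr_bal r by simp
  next
    case False thus ?thesis using mul_zero_out[OF emb_car, of b h] carD(2)[of b h] tr_bal r by simp
  qed
  have "F g h (mul a r, b) = F g h (a, mul r b)" unfolding F_def using 1 2 F_def by (simp add: mult.assoc)
  thus ?case by (intro conjI fins_two) (simp add: SumS_two)
qed


definition dl :: "'g \<Rightarrow> 'g \<Rightarrow> 'a" where "dl k = (\<lambda>j. if j = k then u k else 0)"

lemma dl_car: assumes k: "k \<in> Gm" shows "dl k \<in> car"
proof -
  have "supp (dl k) \<subseteq> {k}" unfolding supp_def dl_def by auto
  hence "finite (supp (dl k))" using finite_subset by blast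
  thus ?thesis unfolding car_iff dl_def using k I_u by (auto simp: I_zero)
qed

lemma mul_dl_l: assumes a: "a \<in> car" and k: "k \<in> Gm" and g: "g \<in> Gm"
  shows "mul (dl k) a g = (if tgt g = tgt k then \<alpha> k (a (cmp (gi k) g)) else 0)"
proof (cases "tgt g = tgt k")
  case True
  let ?h = "cmp (gi k) g"
  have h: "?h \<in> Gm" and sh: "tgt ?h = src k" using k g True by simp_all
  have ckh: "cmp k ?h = g"
  proof -
    have "cmp k ?h = cmp (cmp k (gi k)) g" using cmp_assoc[of k "gi k" g] k g True by simp
    also have "\<dots> = g" using cmp_gi_r[OF k] True cmp_tgt[OF g] by simp
    finally show ?thesis .
  qed
  have "mul (dl k) a g = (\<Sum>(g1, h1)\<in>{(k, ?h)}. T (dl k) a g1 h1)"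
  proof (rule mult_eq_sum[OF dl_car[OF k] a])
    show "{(k, ?h)} \<subseteq> V g" unfolding V_def using h k sh ckh by simp
    fix g1 h1 assume *: "g1 \<in> Gm" "h1 \<in> Gm" "dl k g1 \<noteq> 0" "a h1 \<noteq> 0" "src g1 = tgt h1" "cmp g1 h1 = g"
    have g1: "g1 = k" using *(3) unfolding dl_def by (auto split: if_splits)
    have "h1 = ?h"
    proof (rule cancel_l[OF k *(2) h])
      show "src k = tgt h1" using *(5) g1 by simp
      show "src k = tgt ?h" using sh by simp
      show "cmp k h1 = cmp k ?h" using *(6) g1 ckh by simp
    qed
    thus "(g1, h1) \<in> {(k, ?h)}" using g1 by simp
  qed simp
  also have "\<dots> = T (dl k) a k ?h" by simp
  also have "\<dots> = \<alpha> k (a ?h)"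
  proof -
    have "\<alpha> (gi k) (u k) = u (src k)" using al_u[of "gi k"] k u_gi[OF k] by simp
    moreover have "u (src k) * a ?h = a ?h"
    proof -
      have "a ?h * u (tgt ?h) = a ?h" using carD(3)[OF a h] mem_I[OF h] by blast
      hence "a ?h * u (src k) = a ?h" by (simp only: sh)
      thus ?thesis using uo_central[of "src k" "a ?h"] k by simp
    qed
    ultimately show ?thesis unfolding T_def dl_def by simp
  qed
  finally show ?thesis using True by simp
next
  case False
  have "mul (dl k) a g = (\<Sum>(g1, h1)\<in>{}. T (dl k) a g1 h1)"
  proof (rule mult_eq_sum[OF dl_car[OF k] a])
    fix g1 h1 assume *: "g1 \<in> Gm" "h1 \<in> Gm" "dl k g1 \<noteq> 0" "a h1 \<noteq> 0" "src g1 = tgt h1" "cmp g1 h1 = g"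
    have g1: "g1 = k" using *(3) unfolding dl_def by (auto split: if_splits)
    have "tgt g = tgt k" using tgt_cmp[OF *(1,2,5)] *(6) g1 by simp
    thus "(g1, h1) \<in> {}" using False by simp
  qed simp_all
  thus ?thesis using False by simp
qed

lemma mul_dl_r: assumes b: "b \<in> car" and k: "k \<in> Gm" and h: "h \<in> Gm"
  shows "mul b (dl k) h = (if src h = src k then b (cmp h (gi k)) else 0)"
proof (cases "src h = src k")
  case True
  let ?g = "cmp h (gi k)"
  have g: "?g \<in> Gm" and sg: "src ?g = tgt k" using k h True by simp_all
  have cgk: "cmp ?g k = h"
  proof -
    have "cmp ?g k = cmp h (cmp (gi k) k)" using cmp_assoc[of h "gi k" k] k h True by simp
    also have "\<dots> = h" using cmp_gi_l[OF k] True cmp_src[OF h] by simp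
    finally show ?thesis .
  qed
  have "mul b (dl k) h = (\<Sum>(g1, h1)\<in>{(?g, k)}. T b (dl k) g1 h1)"
  proof (rule mult_eq_sum[OF b dl_car[OF k]])
    show "{(?g, k)} \<subseteq> V h" unfolding V_def using g k sg cgk by simp
    fix g1 h1 assume *: "g1 \<in> Gm" "h1 \<in> Gm" "b g1 \<noteq> 0" "dl k h1 \<noteq> 0" "src g1 = tgt h1" "cmp g1 h1 = h"
    have h1: "h1 = k" using *(4) unfolding dl_def by (auto split: if_splits)
    have "g1 = ?g"
    proof (rule cancel_r[OF k *(1) g])
      show "src g1 = tgt k" using *(5) h1 by simp
      show "src ?g = tgt k" using sg by simp
      show "cmp g1 k = cmp ?g k" using *(6) h1 cgk by simp
    qed
    thus "(g1, h1) \<in> {(?g, k)}" using h1 by simp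
  qed simp
  also have "\<dots> = T b (dl k) ?g k" by simp
  also have "\<dots> = b ?g"
  proof -
    have bg: "b ?g \<in> ideal_of u (gi (gi ?g))" using carD(3)[OF b g] g by simp
    hence y: "\<alpha> (gi ?g) (b ?g) \<in> ideal_of u (gi ?g)" using al_in[of "gi ?g"] g by simp
    hence "\<alpha> (gi ?g) (b ?g) * u k = \<alpha> (gi ?g) (b ?g)" using mem_I_gi[OF g] sg u_tgt[OF k] by simp
    hence "T b (dl k) ?g k = \<alpha> ?g (\<alpha> (gi ?g) (b ?g))" unfolding T_def dl_def by simp
    also have "\<dots> = b ?g" using al_inv[OF g] carD(3)[OF b g] by simp
    finally show ?thesis .
  qed
  finally show ?thesis using True by simp
next
  case False
  have "mul b (dl k) h = (\<Sum>(g1, h1)\<in>{}. T b (dl k) g1 h1)"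
  proof (rule mult_eq_sum[OF b dl_car[OF k]])
    fix g1 h1 assume *: "g1 \<in> Gm" "h1 \<in> Gm" "b g1 \<noteq> 0" "dl k h1 \<noteq> 0" "src g1 = tgt h1" "cmp g1 h1 = h"
    have h1: "h1 = k" using *(4) unfolding dl_def by (auto split: if_splits)
    have "src h = src k" using src_cmp[OF *(1,2,5)] *(6) h1 by simp
    thus "(g1, h1) \<in> {}" using False by simp
  qed simp_all
  thus ?thesis using False by simp
qed

lemma mul_obj: assumes a: "a \<in> car" and b: "b \<in> car" and e0: "e \<in> G0" and Ge: "finite Ge"
  "Ge \<subseteq> {g \<in> Gm. tgt g = e}" "\<And>g. g \<in> Gm \<Longrightarrow> tgt g = e \<Longrightarrow> a g \<noteq> 0 \<Longrightarrow> g \<in> Ge"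
  shows "mul a b e = (\<Sum>g\<in>Ge. \<alpha> g (F g (gi g) (a, b)))"
proof -
  have "mul a b e = (\<Sum>(g1, h1)\<in>(\<lambda>g. (g, gi g)) ` Ge. T a b g1 h1)"
  proof (rule mult_eq_sum[OF a b])
    show "finite ((\<lambda>g. (g, gi g)) ` Ge)" using Ge by simp
    show "(\<lambda>g. (g, gi g)) ` Ge \<subseteq> V e" using Ge(2) unfolding V_def by auto
    fix g1 h1 assume *: "g1 \<in> Gm" "h1 \<in> Gm" "a g1 \<noteq> 0" "b h1 \<noteq> 0" "src g1 = tgt h1" "cmp g1 h1 = e"
    have "h1 = gi g1" using cmp_in_G0[OF *(1,2,5)] *(6) e0 by simp
    moreover have "tgt g1 = e" using tgt_cmp[OF *(1,2,5)] *(6) tgt_obj[OF e0] by simp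
    ultimately show "(g1, h1) \<in> (\<lambda>g. (g, gi g)) ` Ge" using Ge(3) * by auto
  qed
  also have "\<dots> = (\<Sum>g\<in>Ge. T a b g (gi g))"
    by (subst sum.reindex) (auto simp: inj_on_def)
  finally show ?thesis unfolding T_def F_def by simp
qed

lemma comm_eq: assumes xf: "fins x"
  and D: "(\<lambda>p. fs_map (\<lambda>(a, b). (s \<otimes>\<^bsub>S\<^esub> a, b)) x p - fs_map (\<lambda>(a, b). (a, b \<otimes>\<^bsub>S\<^esub> s)) x p) \<in> tensor_rel S R"
  and g: "g \<in> Gm"
  shows "SumS x (\<lambda>q. F g h (mul s (fst q), snd q)) = SumS x (\<lambda>q. F g h (fst q, mul (snd q) s))"
proof -
  define \<phi>1 where "\<phi>1 = (\<lambda>(a, b::'g \<Rightarrow> 'a). (s \<otimes>\<^bsub>S\<^esub> a, b))"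
  define \<phi>2 where "\<phi>2 = (\<lambda>(a::'g \<Rightarrow> 'a, b). (a, b \<otimes>\<^bsub>S\<^esub> s))"
  have z: "SumS (\<lambda>p. fs_map \<phi>1 x p - fs_map \<phi>2 x p) (F g h) = 0"
    using rel_F[OF D[folded \<phi>1_def \<phi>2_def] g] by blast
  have d: "SumS (\<lambda>p. fs_map \<phi>1 x p - fs_map \<phi>2 x p) (F g h) = SumS (fs_map \<phi>1 x) (F g h) - SumS (fs_map \<phi>2 x) (F g h)"
    by (rule SumS_diff[OF fins_fs_map[OF xf] fins_fs_map[OF xf]])
  have "SumS (fs_map \<phi>1 x) (F g h) = SumS (fs_map \<phi>2 x) (F g h)" using z d by (metis right_minus_eq)
  thus ?thesis unfolding SumS_fs_map[OF xf] \<phi>1_def \<phi>2_def by (simp add: split_beta)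
qed

lemma addpow_car: "y \<in> car \<Longrightarrow> add_pow S (n::int) y \<in> car"
proof -
  interpret ab: abelian_group S by (rule abS)
  assume "y \<in> car" thus ?thesis using ab.add.int_pow_closed by simp
qed

lemma tensor_mult_eval: assumes xc: "x \<in> formal_sums S"
  shows "tensor_mult S x k = SumS x (\<lambda>p. mul (fst p) (snd p) k)"
proof -
  have fin: "fins x" and sub: "\<And>p. x p \<noteq> 0 \<Longrightarrow> fst p \<in> car \<and> snd p \<in> car"
    using xc unfolding formal_sums_def by auto
  have "tensor_mult S x k = (\<Sum>p\<in>{p. x p \<noteq> 0}. add_pow S (x p) (mul (fst p) (snd p)) k)"
    unfolding tensor_mult_def using fin sub mult_car addpow_car by (subst finsum_eval) auto
  also have "\<dots> = SumS x (\<lambda>p. mul (fst p) (snd p) k)"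
    unfolding SumS_def using sub mult_car by (intro sum.cong refl) (simp add: addpow_eval)
  finally show ?thesis .
qed


context
  fixes x
  assumes xfs: "x \<in> formal_sums S"
    and xone: "tensor_mult S x = \<one>\<^bsub>S\<^esub>"
    and xcomm: "\<forall>s\<in>carrier S.
           (\<lambda>p. fs_map (\<lambda>(a, b). (s \<otimes>\<^bsub>S\<^esub> a, b)) x p - fs_map (\<lambda>(a, b). (a, b \<otimes>\<^bsub>S\<^esub> s)) x p)
             \<in> tensor_rel S R"
begin

lemma xfin: "fins x" using xfs unfolding formal_sums_def by simp
lemma xcar: "x p \<noteq> 0 \<Longrightarrow> fst p \<in> car \<and> snd p \<in> car"
  using xfs unfolding formal_sums_def by auto

definition cc :: "'g \<Rightarrow> 'g \<Rightarrow> 'a" where "cc g h = SumS x (F g h)"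

lemma comm': "s \<in> car \<Longrightarrow> g \<in> Gm \<Longrightarrow>
   SumS x (\<lambda>q. F g h (mul s (fst q), snd q)) = SumS x (\<lambda>q. F g h (fst q, mul (snd q) s))"
  using comm_eq[OF xfin] xcomm by simp

lemma REL: assumes k: "k \<in> Gm" and g: "g \<in> Gm" and h: "h \<in> Gm" and tg: "tgt g = tgt k" and sh: "src h = src k"
  shows "cc (cmp (gi k) g) h = cc g (cmp h (gi k))"
proof -
  let ?h0 = "cmp (gi k) g"
  have h0: "?h0 \<in> Gm" and th0: "tgt ?h0 = src k" using k g tg by simp_all
  have gi0: "gi ?h0 = cmp (gi g) k" using gi_cmp[of "gi k" g] k g tg by simp
  have L: "F g h (mul (dl k) (fst q), snd q) = F ?h0 h q" if q: "x q \<noteq> 0" for q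
  proof -
    have a: "fst q \<in> car" using xcar q by blast
    have y: "fst q ?h0 \<in> ideal_of u (gi k)"
    proof -
      have "fst q ?h0 * u (tgt ?h0) = fst q ?h0" using carD(3)[OF a h0] mem_I[OF h0] by blast
      thus ?thesis using mem_I_gi[OF k] th0 by simp
    qed
    have "\<alpha> (gi g) (\<alpha> k (fst q ?h0)) = \<alpha> (cmp (gi g) k) (fst q ?h0)"
      by (rule al_comp) (use g k tg y in simp_all)
    thus ?thesis unfolding F_def using mul_dl_l[OF a k g] tg gi0 by simp
  qed
  have Rr: "F g h (fst q, mul (snd q) (dl k)) = F g (cmp h (gi k)) q" if q: "x q \<noteq> 0" for q
  proof -
    have b: "snd q \<in> car" using xcar q by blast
    show ?thesis unfolding F_def using mul_dl_r[OF b k h] sh by simp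
  qed
  have "cc ?h0 h = SumS x (\<lambda>q. F g h (mul (dl k) (fst q), snd q))"
    unfolding cc_def by (rule SumS_cong) (simp add: L)
  also have "\<dots> = SumS x (\<lambda>q. F g h (fst q, mul (snd q) (dl k)))"
    by (rule comm'[OF dl_car[OF k] g])
  also have "\<dots> = cc g (cmp h (gi k))"
    unfolding cc_def by (rule SumS_cong) (simp add: Rr)
  finally show ?thesis .
qed

lemma cc_src: assumes k: "k \<in> Gm" shows "cc (src k) (src k) = cc k (gi k)"
proof -
  have "cc (cmp (gi k) k) (src k) = cc k (cmp (src k) (gi k))"
    by (rule REL) (use k in simp_all)
  moreover have "cmp (src k) (gi k) = gi k" using cmp_tgt[of "gi k"] k by simp
  ultimately show ?thesis using k by simp
qed

lemma cc_shift: assumes g0: "g0 \<in> Gm" and k: "k \<in> Gm" and t: "tgt k = tgt g0"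
  shows "cc (cmp (gi k) g0) (cmp (gi g0) k) = cc g0 (gi g0)"
proof -
  let ?h = "cmp (gi g0) k"
  have h: "?h \<in> Gm" and sh: "src ?h = src k" using g0 k t by simp_all
  have "cc (cmp (gi k) g0) ?h = cc g0 (cmp ?h (gi k))" by (rule REL[OF k g0 h t[symmetric] sh])
  moreover have "cmp ?h (gi k) = gi g0"
  proof -
    have "cmp ?h (gi k) = cmp (gi g0) (cmp k (gi k))" using cmp_assoc[of "gi g0" k "gi k"] g0 k t by simp
    also have "\<dots> = gi g0" using cmp_gi_r[OF k] t cmp_src[of "gi g0"] g0 by simp
    finally show ?thesis .
  qed
  ultimately show ?thesis by simp
qed

lemma F_zero: "g \<in> Gm \<Longrightarrow> fst q g = 0 \<Longrightarrow> F g h q = 0"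
  unfolding F_def using al_zero[of "gi g"] by simp

lemma cc_supp: "finite {(g, h). g \<in> Gm \<and> cc g h \<noteq> 0}"
proof -
  let ?U = "\<Union>q\<in>{q. x q \<noteq> 0}. supp (fst q) \<times> supp (snd q)"
  have "finite ?U" using xfin xcar carD(1) by auto
  moreover have "{(g, h). g \<in> Gm \<and> cc g h \<noteq> 0} \<subseteq> ?U"
  proof clarify
    fix g h assume g: "g \<in> Gm" and c: "cc g h \<noteq> 0"
    have "\<exists>q. x q \<noteq> 0 \<and> F g h q \<noteq> 0"
    proof (rule ccontr)
      assume "\<not> ?thesis"
      hence "cc g h = SumS x (\<lambda>q. 0)" unfolding cc_def by (intro SumS_cong) auto
      thus False using c unfolding SumS_def by simp
    qed
    then obtain q where q: "x q \<noteq> 0" "F g h q \<noteq> 0" by blast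
    hence "fst q g \<noteq> 0" "snd q h \<noteq> 0" using F_zero[OF g] unfolding F_def by auto
    thus "(g, h) \<in> ?U" using q unfolding supp_def by blast
  qed
  ultimately show ?thesis using finite_subset by blast
qed

definition Gx :: "'g \<Rightarrow> 'g set" where
  "Gx e = {g \<in> Gm. tgt g = e \<and> (\<exists>q. x q \<noteq> 0 \<and> fst q g \<noteq> 0)}"

lemma Gx_fin: "finite (Gx e)"
proof -
  have "Gx e \<subseteq> (\<Union>q\<in>{q. x q \<noteq> 0}. supp (fst q))" unfolding Gx_def supp_def by auto
  moreover have "finite (\<Union>q\<in>{q. x q \<noteq> 0}. supp (fst q))" using xfin xcar carD(1) by auto
  ultimately show ?thesis using finite_subset by blast
qed

lemma F_in: assumes g: "g \<in> Gm" and q: "x q \<noteq> 0" shows "F g h q \<in> ideal_of u (gi g)"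
proof -
  have "fst q g \<in> ideal_of u (gi (gi g))" using carD(3)[of "fst q" g] xcar[OF q] g by simp
  hence "\<alpha> (gi g) (fst q g) \<in> ideal_of u (gi g)" using al_in[of "gi g"] g by simp
  thus ?thesis unfolding F_def using I_multr g by simp
qed

lemma al_SumS: assumes g: "g \<in> Gm" and H: "\<And>q. x q \<noteq> 0 \<Longrightarrow> H q \<in> ideal_of u (gi g)"
  shows "\<alpha> g (SumS x H) = SumS x (\<lambda>q. \<alpha> g (H q))"
  unfolding SumS_def using g H by (subst al_sum) (auto simp: al_ofint I_multl)

lemma unit_eq: assumes e0: "e \<in> G0" shows "u e = (\<Sum>g\<in>Gx e. \<alpha> g (cc g (gi g)))"
proof -
  have "u e = tensor_mult S x e" using xone e0 by simp
  also have "\<dots> = SumS x (\<lambda>p. mul (fst p) (snd p) e)" by (rule tensor_mult_eval[OF xfs])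
  also have "\<dots> = SumS x (\<lambda>p. \<Sum>g\<in>Gx e. \<alpha> g (F g (gi g) p))"
  proof (rule SumS_cong)
    fix p assume p: "x p \<noteq> 0"
    have "mul (fst p) (snd p) e = (\<Sum>g\<in>Gx e. \<alpha> g (F g (gi g) (fst p, snd p)))"
    proof (rule mul_obj)
      show "\<And>g. g \<in> Gm \<Longrightarrow> tgt g = e \<Longrightarrow> fst p g \<noteq> 0 \<Longrightarrow> g \<in> Gx e"
        unfolding Gx_def using p by blast
    qed (use xcar[OF p] e0 Gx_fin in \<open>auto simp: Gx_def\<close>)
    thus "mul (fst p) (snd p) e = (\<Sum>g\<in>Gx e. \<alpha> g (F g (gi g) p))" by simp
  qed
  also have "\<dots> = (\<Sum>g\<in>Gx e. SumS x (\<lambda>p. \<alpha> g (F g (gi g) p)))" by (rule SumS_swap)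
  also have "\<dots> = (\<Sum>g\<in>Gx e. \<alpha> g (cc g (gi g)))"
    unfolding cc_def by (rule sum.cong[OF refl], rule al_SumS[symmetric]) (auto simp: Gx_def F_in)
  finally show ?thesis .
qed


lemma G0_ne: "G0 \<noteq> {}" using sum1 by auto

lemma ex_g0: "\<exists>g0\<in>Gm. cc g0 (gi g0) \<noteq> 0"
proof (rule ccontr)
  assume "\<not> ?thesis"
  hence z: "\<And>g. g \<in> Gm \<Longrightarrow> cc g (gi g) = 0" by blast
  obtain e where e: "e \<in> G0" using G0_ne by blast
  have "u e = (\<Sum>g\<in>Gx e. \<alpha> g (cc g (gi g)))" by (rule unit_eq[OF e])
  also have "\<dots> = 0" by (rule sum.neutral) (auto simp: Gx_def z al_zero)
  finally show False using nz e by simp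
qed

lemma Gm_fin: "finite Gm"
proof -
  obtain g0 where g0: "g0 \<in> Gm" "cc g0 (gi g0) \<noteq> 0" using ex_g0 by blast
  let ?H = "{k \<in> Gm. tgt k = tgt g0}"
  let ?f = "\<lambda>k. (cmp (gi k) g0, cmp (gi g0) k)"
  have "?f k \<in> {(g, h). g \<in> Gm \<and> cc g h \<noteq> 0}" if kH: "k \<in> ?H" for k
  proof -
    have k: "k \<in> Gm" "tgt k = tgt g0" using kH by auto
    have "cmp (gi k) g0 \<in> Gm" using k g0 by simp
    moreover have "cc (cmp (gi k) g0) (cmp (gi g0) k) \<noteq> 0" using cc_shift[OF g0(1) k] g0(2) by simp
    ultimately show ?thesis by simp
  qed
  hence "?f ` ?H \<subseteq> {(g, h). g \<in> Gm \<and> cc g h \<noteq> 0}" by blast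
  hence fi: "finite (?f ` ?H)" using cc_supp finite_subset by blast
  have "inj_on ?f ?H"
  proof (rule inj_onI)
    fix k k' assume k: "k \<in> ?H" and k': "k' \<in> ?H" and e: "?f k = ?f k'"
    have "gi k = gi k'"
    proof (rule cancel_r[of g0])
      show "cmp (gi k) g0 = cmp (gi k') g0" using e by simp
    qed (use k k' g0 in auto)
    thus "k = k'" using gi_gi k k' by (metis (no_types, lifting) mem_Collect_eq)
  qed
  hence fH: "finite ?H" using fi finite_imageD by blast
  have "Gm \<subseteq> (\<lambda>(m, k). cmp (gi m) k) ` (?H \<times> ?H)"
  proof
    fix g assume g: "g \<in> Gm"
    have "hom_set Gm src tgt (tgt g) (tgt g0) \<noteq> {}" using conn g g0 unfolding groupoid_connected_def by simp
    then obtain m where m: "m \<in> Gm" "src m = tgt g" "tgt m = tgt g0" unfolding hom_set_def by blast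
    have mg: "cmp m g \<in> ?H" using m g by simp
    have "cmp (gi m) (cmp m g) = cmp (cmp (gi m) m) g" using cmp_assoc[of "gi m" m g] m g by simp
    also have "\<dots> = g" using cmp_gi_l[OF m(1)] m(2) cmp_tgt[OF g] by simp
    finally show "g \<in> (\<lambda>(m, k). cmp (gi m) k) ` (?H \<times> ?H)" using mg m by force
  qed
  thus ?thesis using fH finite_subset by blast
qed

lemma unit_eq_full: assumes e0: "e \<in> G0" shows "u e = (\<Sum>g\<in>{g \<in> Gm. tgt g = e}. \<alpha> g (cc g (gi g)))"
proof -
  have "u e = (\<Sum>g\<in>Gx e. \<alpha> g (cc g (gi g)))" by (rule unit_eq[OF e0])
  also have "\<dots> = (\<Sum>g\<in>{g \<in> Gm. tgt g = e}. \<alpha> g (cc g (gi g)))"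
  proof (rule sum.mono_neutral_left)
    show "finite {g \<in> Gm. tgt g = e}" using Gm_fin by simp
    show "Gx e \<subseteq> {g \<in> Gm. tgt g = e}" unfolding Gx_def by auto
    show "\<forall>g\<in>{g \<in> Gm. tgt g = e} - Gx e. \<alpha> g (cc g (gi g)) = 0"
    proof
      fix g assume gg: "g \<in> {g \<in> Gm. tgt g = e} - Gx e"
      hence g: "g \<in> Gm" "tgt g = e" "g \<notin> Gx e" by auto
      hence "\<And>q. x q \<noteq> 0 \<Longrightarrow> fst q g = 0" unfolding Gx_def by auto
      hence "cc g (gi g) = SumS x (\<lambda>q. 0)" unfolding cc_def using F_zero g(1) by (intro SumS_cong) auto
      thus "\<alpha> g (cc g (gi g)) = 0" unfolding SumS_def using al_zero g(1) by simp
    qed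
  qed
  finally show ?thesis .
qed

lemma cc_central: assumes e0: "e \<in> G0" shows "b * cc e e = cc e e * b"
proof -
  have e: "e \<in> Gm" using G0_sub e0 .
  have L: "F e e (mul (emb b) (fst q), snd q) = b * F e e q" if q: "x q \<noteq> 0" for q
  proof -
    have a: "fst q \<in> car" using xcar q by blast
    have ae: "fst q e \<in> ideal_of u e" using carD(3)[OF a e] .
    have "b * fst q e \<in> ideal_of u e" using I_multl[OF e ae] .
    thus ?thesis unfolding F_def using mul_emb_l[OF a e] al_obj[OF e0] ae gi_obj[OF e0] by (simp add: mult.assoc)
  qed
  have Rr: "F e e (fst q, mul (snd q) (emb b)) = F e e q * b" if q: "x q \<noteq> 0" for q
  proof -
    have a: "fst q \<in> car" and bb: "snd q \<in> car" using xcar q by blast+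
    have ae: "fst q e \<in> ideal_of u e" using carD(3)[OF a e] .
    have be: "snd q e \<in> ideal_of u e" using carD(3)[OF bb e] .
    have "snd q e * b \<in> ideal_of u e" using I_multr[OF e be] .
    thus ?thesis unfolding F_def using mul_emb_r[OF bb e] al_obj[OF e0] ae be gi_obj[OF e0] by (simp add: mult.assoc)
  qed
  have "b * cc e e = SumS x (\<lambda>q. F e e (mul (emb b) (fst q), snd q))"
    unfolding cc_def SumS_mult_left[symmetric] by (rule SumS_cong) (simp add: L)
  also have "\<dots> = SumS x (\<lambda>q. F e e (fst q, mul (snd q) (emb b)))" by (rule comm'[OF emb_car e])
  also have "\<dots> = cc e e * b"
    unfolding cc_def SumS_mult_right[symmetric] by (rule SumS_cong) (simp add: Rr)
  finally show ?thesis .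
qed

lemma cc_u: assumes g: "g \<in> Gm" shows "cc g h * u (src g) = cc g h"
proof -
  have "cc g h * u (src g) = SumS x (\<lambda>q. F g h q * u (src g))" unfolding cc_def by (rule SumS_mult_right[symmetric])
  also have "\<dots> = cc g h" unfolding cc_def
  proof (rule SumS_cong)
    fix q assume "x q \<noteq> 0"
    thus "F g h q * u (src g) = F g h q" using F_in[OF g] mem_I_gi[OF g] by blast
  qed
  finally show ?thesis .
qed


lemma a_u: assumes g: "g \<in> Gm" shows "(\<Sum>e\<in>G0. cc e e) * u (src g) = cc (src g) (src g)"
proof -
  have s0: "src g \<in> G0" using g by simp
  have "(\<Sum>e\<in>G0. cc e e) * u (src g) = (\<Sum>e\<in>G0. if e = src g then cc e e else 0)"
    unfolding sum_distrib_right
  proof (rule sum.cong[OF refl])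
    fix e assume e0: "e \<in> G0"
    have e: "e \<in> Gm" using G0_sub e0 .
    have ce: "cc e e * u e = cc e e" using cc_u[OF e] src_obj[OF e0] by simp
    show "cc e e * u (src g) = (if e = src g then cc e e else 0)"
    proof (cases "e = src g")
      case True thus ?thesis using ce by simp
    next
      case False
      have "cc e e * u (src g) = cc e e * (u e * u (src g))" using ce by (metis mult.assoc)
      also have "\<dots> = 0" using orth e0 s0 False by simp
      finally show ?thesis using False by simp
    qed
  qed
  also have "\<dots> = cc (src g) (src g)" using s0 by (simp add: sum.delta[OF finG0])
  finally show ?thesis .
qed

lemma fwd: "finite Gm \<and> (\<exists>a. central a \<and> (\<forall>e\<in>G0. trace_map Gm G0 src tgt gi u \<alpha> e a = u e))"
proof (intro conjI exI ballI)
  show fG: "finite Gm" by (rule Gm_fin)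
  let ?a = "\<Sum>e\<in>G0. cc e e"
  show "central ?a" unfolding central_def
    by (simp add: sum_distrib_left sum_distrib_right cc_central)
  fix e assume e0: "e \<in> G0"
  let ?T = "{g \<in> Gm. tgt g = e}"
  have "trace_map Gm G0 src tgt gi u \<alpha> e ?a = (\<Sum>ei\<in>G0. \<Sum>g\<in>{g \<in> ?T. src g = ei}. \<alpha> g (?a * u (gi g)))"
    unfolding trace_map_def hom_set_def by (intro sum.cong refl) auto
  also have "\<dots> = (\<Sum>g\<in>?T. \<alpha> g (?a * u (gi g)))"
    by (rule sum.group) (use fG finG0 in auto)
  also have "\<dots> = (\<Sum>g\<in>?T. \<alpha> g (cc g (gi g)))"
    by (rule sum.cong[OF refl]) (simp add: u_gi a_u cc_src)
  also have "\<dots> = u e" using unit_eq_full[OF e0] by simp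
  finally show "trace_map Gm G0 src tgt gi u \<alpha> e ?a = u e" .
qed

end

lemma forward: assumes "separable_extension S R"
  shows "finite Gm \<and> (\<exists>a. central a \<and> (\<forall>e\<in>G0. trace_map Gm G0 src tgt gi u \<alpha> e a = u e))"
proof -
  obtain x where "x \<in> formal_sums S" "tensor_mult S x = \<one>\<^bsub>S\<^esub>"
    "\<forall>s\<in>carrier S.
           (\<lambda>p. fs_map (\<lambda>(a, b). (s \<otimes>\<^bsub>S\<^esub> a, b)) x p - fs_map (\<lambda>(a, b). (a, b \<otimes>\<^bsub>S\<^esub> s)) x p)
             \<in> tensor_rel S R"
    using assms unfolding separable_extension_def by blast
  thus ?thesis by (rule fwd)
qed


lemma trace_eq: assumes fG: "finite Gm" and e0: "e \<in> G0"
  shows "trace_map Gm G0 src tgt gi u \<alpha> e a = (\<Sum>g\<in>{g \<in> Gm. tgt g = e}. \<alpha> g (a * u (src g)))"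
proof -
  let ?T = "{g \<in> Gm. tgt g = e}"
  have "trace_map Gm G0 src tgt gi u \<alpha> e a = (\<Sum>ei\<in>G0. \<Sum>g\<in>{g \<in> ?T. src g = ei}. \<alpha> g (a * u (gi g)))"
    unfolding trace_map_def hom_set_def by (intro sum.cong refl) auto
  also have "\<dots> = (\<Sum>g\<in>?T. \<alpha> g (a * u (gi g)))"
    by (rule sum.group) (use fG finG0 in auto)
  also have "\<dots> = (\<Sum>g\<in>?T. \<alpha> g (a * u (src g)))"
    by (rule sum.cong[OF refl]) (simp add: u_gi)
  finally show ?thesis .
qed

definition mon :: "'g \<Rightarrow> 'a \<Rightarrow> 'g \<Rightarrow> 'a" where "mon k c = (\<lambda>j. if j = k then c else 0)"

lemma mon_car: assumes k: "k \<in> Gm" and c: "c \<in> ideal_of u k" shows "mon k c \<in> car"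
proof -
  have "supp (mon k c) \<subseteq> {k}" unfolding supp_def mon_def by auto
  hence "finite (supp (mon k c))" using finite_subset by blast
  thus ?thesis unfolding car_iff mon_def using k c by (auto simp: I_zero)
qed

lemma dl_mono: "dl k = mon k (u k)" unfolding dl_def mon_def by simp

lemma mul_mon_l: assumes a: "a \<in> car" and k: "k \<in> Gm" and c: "c \<in> ideal_of u k" and g: "g \<in> Gm"
  shows "mul (mon k c) a g = (if tgt g = tgt k then \<alpha> k (\<alpha> (gi k) c * a (cmp (gi k) g)) else 0)"
proof (cases "tgt g = tgt k")
  case True
  let ?h = "cmp (gi k) g"
  have h: "?h \<in> Gm" and sh: "tgt ?h = src k" using k g True by simp_all
  have ckh: "cmp k ?h = g"
  proof -
    have "cmp k ?h = cmp (cmp k (gi k)) g" using cmp_assoc[of k "gi k" g] k g True by simp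
    also have "\<dots> = g" using cmp_gi_r[OF k] True cmp_tgt[OF g] by simp
    finally show ?thesis .
  qed
  have "mul (mon k c) a g = (\<Sum>(g1, h1)\<in>{(k, ?h)}. T (mon k c) a g1 h1)"
  proof (rule mult_eq_sum[OF mon_car[OF k c] a])
    show "{(k, ?h)} \<subseteq> V g" unfolding V_def using h k sh ckh by simp
    fix g1 h1 assume *: "g1 \<in> Gm" "h1 \<in> Gm" "mon k c g1 \<noteq> 0" "a h1 \<noteq> 0" "src g1 = tgt h1" "cmp g1 h1 = g"
    have g1: "g1 = k" using *(3) unfolding mon_def by (auto split: if_splits)
    have "h1 = ?h"
    proof (rule cancel_l[OF k *(2) h])
      show "src k = tgt h1" using *(5) g1 by simp
      show "src k = tgt ?h" using sh by simp
      show "cmp k h1 = cmp k ?h" using *(6) g1 ckh by simp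
    qed
    thus "(g1, h1) \<in> {(k, ?h)}" using g1 by simp
  qed simp
  also have "\<dots> = T (mon k c) a k ?h" by simp
  finally show ?thesis using True unfolding T_def mon_def by simp
next
  case False
  have "mul (mon k c) a g = (\<Sum>(g1, h1)\<in>{}. T (mon k c) a g1 h1)"
  proof (rule mult_eq_sum[OF mon_car[OF k c] a])
    fix g1 h1 assume *: "g1 \<in> Gm" "h1 \<in> Gm" "mon k c g1 \<noteq> 0" "a h1 \<noteq> 0" "src g1 = tgt h1" "cmp g1 h1 = g"
    have g1: "g1 = k" using *(3) unfolding mon_def by (auto split: if_splits)
    have "tgt g = tgt k" using tgt_cmp[OF *(1,2,5)] *(6) g1 by simp
    thus "(g1, h1) \<in> {}" using False by simp
  qed simp_all
  thus ?thesis using False by simp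
qed

abbreviation "TR \<equiv> tensor_rel S R"

lemma TR_sum: "(\<And>i. i \<in> I \<Longrightarrow> f i \<in> TR) \<Longrightarrow> (\<lambda>p. \<Sum>i\<in>I. f i p) \<in> TR"
proof (induction I rule: infinite_finite_induct)
  case (infinite A) thus ?case using tensor_rel.tr_zero by simp
next
  case empty thus ?case using tensor_rel.tr_zero by simp
next
  case (insert i I) thus ?case using tensor_rel.tr_add[of "f i" S R "\<lambda>p. \<Sum>i\<in>I. f i p"] by simp
qed

lemma TR_diff: "x \<in> TR \<Longrightarrow> y \<in> TR \<Longrightarrow> (\<lambda>p. x p - y p) \<in> TR"
  using tensor_rel.tr_add[of x S R "\<lambda>p. - y p"] tensor_rel.tr_neg[of y S R] by simp

lemma TR_single0l: assumes v: "v \<in> car" shows "single ((\<lambda>g. 0), v) \<in> TR"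
proof -
  have "(\<lambda>p. single (add S (\<lambda>g. 0) (\<lambda>g. 0), v) p - single ((\<lambda>g. 0), v) p - single ((\<lambda>g. 0), v) p) \<in> TR"
    by (rule tensor_rel.tr_addl) (simp_all add: car_zero v)
  hence "(\<lambda>p. - single ((\<lambda>g. 0), v) p) \<in> TR" by simp
  from tensor_rel.tr_neg[OF this] show ?thesis by simp
qed

lemma TR_single0r: assumes v: "v \<in> car" shows "single (v, (\<lambda>g. 0)) \<in> TR"
proof -
  have "(\<lambda>p. single (v, add S (\<lambda>g. 0) (\<lambda>g. 0)) p - single (v, (\<lambda>g. 0)) p - single (v, (\<lambda>g. 0)) p) \<in> TR"
    by (rule tensor_rel.tr_addr) (simp_all add: car_zero v)
  hence "(\<lambda>p. - single (v, (\<lambda>g. 0)) p) \<in> TR" by simp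
  from tensor_rel.tr_neg[OF this] show ?thesis by simp
qed


lemma TR_trans: "(\<lambda>p. x p - y p) \<in> TR \<Longrightarrow> (\<lambda>p. z p - y p) \<in> TR \<Longrightarrow> (\<lambda>p. x p - z p) \<in> TR"
  using TR_diff[of "\<lambda>p. x p - y p" "\<lambda>p. z p - y p"] by simp

context
  fixes a
  assumes fG: "finite Gm" and ac: "central a"
    and tr: "\<forall>e\<in>G0. trace_map Gm G0 src tgt gi u \<alpha> e a = u e"
begin

definition Bg :: "'g \<Rightarrow> 'g \<Rightarrow> 'a" where "Bg g = mon (gi g) (a * u (src g))"

lemma d_in: "g \<in> Gm \<Longrightarrow> a * u (src g) \<in> ideal_of u (gi g)"
  using mem_I_gi[of g] u_idem[of "src g"] by (simp add: mult.assoc)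

lemma Bg_car: "g \<in> Gm \<Longrightarrow> Bg g \<in> car"
  unfolding Bg_def by (rule mon_car) (simp_all add: d_in)

lemma mul_dl_Bg: assumes g: "g \<in> Gm" and k: "k \<in> Gm"
  shows "mul (dl g) (Bg g) k = (if k = tgt g then \<alpha> g (a * u (src g)) else 0)"
proof -
  have e: "mul (dl g) (Bg g) k = (if tgt k = tgt g then \<alpha> g (Bg g (cmp (gi g) k)) else 0)"
    by (rule mul_dl_l[OF Bg_car[OF g] g k])
  show ?thesis
  proof (cases "tgt k = tgt g")
    case True
    have "cmp (gi g) k = gi g \<longleftrightarrow> k = tgt g"
    proof
      assume "cmp (gi g) k = gi g"
      hence eq: "cmp (gi g) k = cmp (gi g) (tgt g)" using cmp_src[of "gi g"] g by simp
      show "k = tgt g" by (rule cancel_l[OF gi_Gm[OF g] k tgt_Gm[OF g] _ _ eq]) (use g True in simp_all)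
    next
      assume "k = tgt g" thus "cmp (gi g) k = gi g" using cmp_src[of "gi g"] g by simp
    qed
    thus ?thesis using e True unfolding Bg_def mon_def by (auto simp: al_zero g)
  next
    case False
    moreover have "k \<noteq> tgt g" using False g by auto
    ultimately show ?thesis using e by simp
  qed
qed

definition xx :: "('g \<Rightarrow> 'a) \<times> ('g \<Rightarrow> 'a) \<Rightarrow> int" where
  "xx = (\<lambda>p. \<Sum>g\<in>Gm. single (dl g, Bg g) p)"

lemma xx_fs: "xx \<in> formal_sums S"
proof -
  have "fins xx" unfolding xx_def by (rule fins_sum) (rule fins_single)
  moreover have "{p. xx p \<noteq> 0} \<subseteq> car \<times> car"
  proof
    fix p assume "p \<in> {p. xx p \<noteq> 0}"
    hence nz: "(\<Sum>g\<in>Gm. single (dl g, Bg g) p) \<noteq> 0" unfolding xx_def by simp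
    have "\<exists>g\<in>Gm. single (dl g, Bg g) p \<noteq> 0"
    proof (rule ccontr)
      assume "\<not> ?thesis"
      hence "(\<Sum>g\<in>Gm. single (dl g, Bg g) p) = 0" by simp
      thus False using nz by simp
    qed
    then obtain g where "g \<in> Gm" "p = (dl g, Bg g)" unfolding single_def by (auto split: if_splits)
    thus "p \<in> car \<times> car" using dl_car Bg_car by simp
  qed
  ultimately show ?thesis unfolding formal_sums_def by simp
qed

lemma xx_one: "tensor_mult S xx = \<one>\<^bsub>S\<^esub>"
proof
  fix k
  have "tensor_mult S xx k = SumS xx (\<lambda>p. mul (fst p) (snd p) k)" by (rule tensor_mult_eval[OF xx_fs])
  also have "\<dots> = (\<Sum>g\<in>Gm. mul (dl g) (Bg g) k)" unfolding xx_def by (simp add: SumS_sum_single fG)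
  also have "\<dots> = (if k \<in> G0 then u k else 0)"
  proof (cases "k \<in> Gm")
    case False
    hence "\<And>g. g \<in> Gm \<Longrightarrow> mul (dl g) (Bg g) k = 0" using mul_zero_out dl_car Bg_car by blast
    thus ?thesis using False G0_sub by auto
  next
    case k: True
    have "(\<Sum>g\<in>Gm. mul (dl g) (Bg g) k) = (\<Sum>g\<in>Gm. if tgt g = k then \<alpha> g (a * u (src g)) else 0)"
      by (rule sum.cong[OF refl]) (auto simp: mul_dl_Bg k)
    also have "\<dots> = (\<Sum>g\<in>{g \<in> Gm. tgt g = k}. \<alpha> g (a * u (src g)))"
      by (simp add: sum.inter_filter[OF fG])
    also have "\<dots> = (if k \<in> G0 then u k else 0)"
    proof (cases "k \<in> G0")
      case True thus ?thesis using trace_eq[OF fG True, of a] tr by simp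
    next
      case False
      hence e: "{g \<in> Gm. tgt g = k} = {}" by auto
      show ?thesis unfolding e using False by simp
    qed
    finally show ?thesis .
  qed
  finally show "tensor_mult S xx k = \<one>\<^bsub>S\<^esub> k" by simp
qed


lemma zero_fun_eq: "f \<in> car \<Longrightarrow> f' \<in> car \<Longrightarrow> (\<And>j. j \<in> Gm \<Longrightarrow> f j = f' j) \<Longrightarrow> f = f'"
proof -
  assume f: "f \<in> car" and f': "f' \<in> car" and e: "\<And>j. j \<in> Gm \<Longrightarrow> f j = f' j"
  show "f = f'"
  proof
    fix j show "f j = f' j" using e[of j] carD(2)[OF f, of j] carD(2)[OF f', of j] by (cases "j \<in> Gm") auto
  qed
qed

lemma P_mon_dl: assumes k: "k \<in> Gm" and c: "c \<in> ideal_of u k" and g: "g \<in> Gm"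
  shows "mul (mon k c) (dl g) = (if src k = tgt g then mon (cmp k g) c else (\<lambda>j. 0))"
proof (rule zero_fun_eq)
  show "mul (mon k c) (dl g) \<in> car" using mult_car mon_car[OF k c] dl_car[OF g] by blast
  show "(if src k = tgt g then mon (cmp k g) c else (\<lambda>j. 0)) \<in> car"
  proof (cases "src k = tgt g")
    case True
    have "c \<in> ideal_of u (cmp k g)" using c k g True by (simp add: mem_I)
    thus ?thesis using True mon_car[of "cmp k g" c] k g by simp
  qed (simp add: car_zero)
  fix j assume j: "j \<in> Gm"
  have e: "mul (mon k c) (dl g) j = (if src j = src g then mon k c (cmp j (gi g)) else 0)"
    by (rule mul_dl_r[OF mon_car[OF k c] g j])
  show "mul (mon k c) (dl g) j = (if src k = tgt g then mon (cmp k g) c else (\<lambda>j. 0)) j"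
  proof (cases "src k = tgt g")
    case True
    have iff: "(src j = src g \<and> cmp j (gi g) = k) \<longleftrightarrow> j = cmp k g"
    proof
      assume *: "src j = src g \<and> cmp j (gi g) = k"
      have "cmp (cmp j (gi g)) g = cmp j (cmp (gi g) g)" using cmp_assoc[of j "gi g" g] j g * by simp
      also have "\<dots> = j" using cmp_gi_l[OF g] * cmp_src[OF j] by simp
      finally show "j = cmp k g" using * by simp
    next
      assume *: "j = cmp k g"
      have "cmp (cmp k g) (gi g) = cmp k (cmp g (gi g))" using cmp_assoc[of k g "gi g"] k g True by simp
      also have "\<dots> = k" using cmp_gi_r[OF g] True cmp_src[OF k] by simp
      finally show "src j = src g \<and> cmp j (gi g) = k" using * k g True by simp
    qed
    show ?thesis using e iff True unfolding mon_def by auto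
  next
    case False
    have "\<not> (src j = src g \<and> cmp j (gi g) = k)"
    proof
      assume *: "src j = src g \<and> cmp j (gi g) = k"
      hence "src k = src (cmp j (gi g))" by simp
      also have "\<dots> = tgt g" using src_cmp[of j "gi g"] j g * by simp
      finally show False using False by simp
    qed
    thus ?thesis using e False unfolding mon_def by auto
  qed
qed

lemma P_Bg_mono: assumes g: "g \<in> Gm" and k: "k \<in> Gm" and c: "c \<in> ideal_of u k"
  shows "mul (Bg g) (mon k c) = (if tgt k = tgt g then mon (cmp (gi g) k) (a * u (src g) * \<alpha> (gi g) c) else (\<lambda>j. 0))"
proof (rule zero_fun_eq)
  let ?d = "a * u (src g)"
  have d: "?d \<in> ideal_of u (gi g)" using d_in[OF g] .
  show "mul (Bg g) (mon k c) \<in> car" using mult_car Bg_car[OF g] mon_car[OF k c] by blast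
  show "(if tgt k = tgt g then mon (cmp (gi g) k) (?d * \<alpha> (gi g) c) else (\<lambda>j. 0)) \<in> car"
  proof (cases "tgt k = tgt g")
    case True
    have "c \<in> ideal_of u (gi (gi g))" using c k g True by (simp add: mem_I)
    hence "\<alpha> (gi g) c \<in> ideal_of u (gi g)" using al_in[of "gi g"] g by simp
    hence "?d * \<alpha> (gi g) c \<in> ideal_of u (cmp (gi g) k)" using I_multl[of "gi g"] g k True by (simp add: mem_I)
    thus ?thesis using True mon_car[of "cmp (gi g) k"] k g by simp
  qed (simp add: car_zero)
  fix j assume j: "j \<in> Gm"
  have e: "mul (Bg g) (mon k c) j = (if tgt j = src g then \<alpha> (gi g) (\<alpha> g ?d * mon k c (cmp g j)) else 0)"
    using mul_mon_l[OF mon_car[OF k c] gi_Gm[OF g] d j] g unfolding Bg_def by simp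
  show "mul (Bg g) (mon k c) j = (if tgt k = tgt g then mon (cmp (gi g) k) (?d * \<alpha> (gi g) c) else (\<lambda>j. 0)) j"
  proof (cases "tgt k = tgt g")
    case True
    have iff: "(tgt j = src g \<and> cmp g j = k) \<longleftrightarrow> j = cmp (gi g) k"
    proof
      assume *: "tgt j = src g \<and> cmp g j = k"
      have "cmp (gi g) (cmp g j) = cmp (cmp (gi g) g) j" using cmp_assoc[of "gi g" g j] j g * by simp
      also have "\<dots> = j" using cmp_gi_l[OF g] * cmp_tgt[OF j] by simp
      finally show "j = cmp (gi g) k" using * by simp
    next
      assume *: "j = cmp (gi g) k"
      have "cmp g (cmp (gi g) k) = cmp (cmp g (gi g)) k" using cmp_assoc[of g "gi g" k] k g True by simp
      also have "\<dots> = k" using cmp_gi_r[OF g] True cmp_tgt[OF k] by simp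
      finally show "tgt j = src g \<and> cmp g j = k" using * k g True by simp
    qed
    have cg: "c \<in> ideal_of u (gi (gi g))" using c k g True by (simp add: mem_I)
    have ag: "\<alpha> g ?d \<in> ideal_of u (gi (gi g))" using al_in[OF g d] g by simp
    have val: "\<alpha> (gi g) (\<alpha> g ?d * c) = ?d * \<alpha> (gi g) c"
      using al_mult[OF gi_Gm[OF g] ag cg] al_inv'[OF g d] by simp
    show ?thesis using e iff True val unfolding mon_def by (auto simp: al_zero g)
  next
    case False
    show ?thesis
    proof (cases "tgt j = src g")
      case True
      have "cmp g j \<noteq> k"
      proof
        assume *: "cmp g j = k"
        hence "tgt k = tgt g" using * tgt_cmp[of g j] g j True by simp
        thus False using False by simp
      qed
      thus ?thesis using e False True unfolding mon_def by (auto simp: al_zero g)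
    next
      case F2: False
      thus ?thesis using e False by simp
    qed
  qed
qed


lemma P_dl_emb: assumes h: "h \<in> Gm" and c: "c \<in> ideal_of u (gi h)"
  shows "mul (dl h) (emb c) = mon h (\<alpha> h c)"
proof (rule zero_fun_eq)
  show "mul (dl h) (emb c) \<in> car" using mult_car dl_car[OF h] emb_car by blast
  show "mon h (\<alpha> h c) \<in> car" using mon_car[OF h] al_in[OF h c] by blast
  fix j assume j: "j \<in> Gm"
  have e: "mul (dl h) (emb c) j = \<alpha> j (\<alpha> (gi j) (dl h j) * c)" by (rule mul_emb_r[OF dl_car[OF h] j])
  show "mul (dl h) (emb c) j = mon h (\<alpha> h c) j"
  proof (cases "j = h")
    case True
    have "\<alpha> (gi h) (u h) = u (src h)" using al_u[of "gi h"] h u_gi[OF h] by simp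
    moreover have "u (src h) * c = c" using mem_I_gi[OF h] c uo_central[of "src h" c] h by simp
    ultimately show ?thesis using e True unfolding dl_def mon_def by simp
  next
    case False
    thus ?thesis using e unfolding dl_def mon_def by (simp add: al_zero j)
  qed
qed

lemma P_emb_Bg: assumes g: "g \<in> Gm"
  shows "mul (emb c) (Bg g) = mon (gi g) (c * (a * u (src g)))"
proof (rule zero_fun_eq)
  show "mul (emb c) (Bg g) \<in> car" using mult_car emb_car Bg_car[OF g] by blast
  show "mon (gi g) (c * (a * u (src g))) \<in> car" using mon_car[of "gi g"] g I_multl d_in[OF g] by simp
  fix j assume j: "j \<in> Gm"
  show "mul (emb c) (Bg g) j = mon (gi g) (c * (a * u (src g))) j"
    using mul_emb_l[OF Bg_car[OF g] j] unfolding Bg_def mon_def by simp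
qed

lemma distr_dl: assumes s1: "s1 \<in> car" and s2: "s2 \<in> car" and g: "g \<in> Gm"
  shows "mul (\<lambda>j. s1 j + s2 j) (dl g) = add S (mul s1 (dl g)) (mul s2 (dl g))"
proof (rule zero_fun_eq)
  show "mul (\<lambda>j. s1 j + s2 j) (dl g) \<in> car" using mult_car car_add[OF s1 s2] dl_car[OF g] by blast
  show "add S (mul s1 (dl g)) (mul s2 (dl g)) \<in> car" using mult_car s1 s2 dl_car[OF g] car_add by simp
  fix j assume j: "j \<in> Gm"
  show "mul (\<lambda>j. s1 j + s2 j) (dl g) j = add S (mul s1 (dl g)) (mul s2 (dl g)) j"
    using mul_dl_r[OF car_add[OF s1 s2] g j] mul_dl_r[OF s1 g j] mul_dl_r[OF s2 g j] by simp
qed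

lemma distr_Bg: assumes s1: "s1 \<in> car" and s2: "s2 \<in> car" and g: "g \<in> Gm"
  shows "mul (Bg g) (\<lambda>j. s1 j + s2 j) = add S (mul (Bg g) s1) (mul (Bg g) s2)"
proof (rule zero_fun_eq)
  let ?d = "a * u (src g)"
  have d: "?d \<in> ideal_of u (gi g)" using d_in[OF g] .
  show "mul (Bg g) (\<lambda>j. s1 j + s2 j) \<in> car" using mult_car car_add[OF s1 s2] Bg_car[OF g] by blast
  show "add S (mul (Bg g) s1) (mul (Bg g) s2) \<in> car" using mult_car s1 s2 Bg_car[OF g] car_add by simp
  fix j assume j: "j \<in> Gm"
  have ad: "\<alpha> g ?d \<in> ideal_of u g" using al_in[OF g d] .
  have m: "mul (Bg g) f j = (if tgt j = src g then \<alpha> (gi g) (\<alpha> g ?d * f (cmp g j)) else 0)" if f: "f \<in> car" for f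
    using mul_mon_l[OF f gi_Gm[OF g] d j] g unfolding Bg_def by simp
  show "mul (Bg g) (\<lambda>j. s1 j + s2 j) j = add S (mul (Bg g) s1) (mul (Bg g) s2) j"
  proof (cases "tgt j = src g")
    case True
    let ?h = "cmp g j"
    have I1: "\<alpha> g ?d * s1 ?h \<in> ideal_of u (gi (gi g))" using I_multr[OF g ad] g by simp
    have I2: "\<alpha> g ?d * s2 ?h \<in> ideal_of u (gi (gi g))" using I_multr[OF g ad] g by simp
    have "\<alpha> (gi g) (\<alpha> g ?d * (s1 ?h + s2 ?h)) = \<alpha> (gi g) (\<alpha> g ?d * s1 ?h) + \<alpha> (gi g) (\<alpha> g ?d * s2 ?h)"
      using al_add[OF gi_Gm[OF g] I1 I2] by (simp add: distrib_left)
    thus ?thesis using m[OF car_add[OF s1 s2]] m[OF s1] m[OF s2] True by simp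
  next
    case False
    thus ?thesis using m[OF car_add[OF s1 s2]] m[OF s1] m[OF s2] by simp
  qed
qed

definition Qf :: "('g \<Rightarrow> 'a) \<Rightarrow> ('g \<Rightarrow> 'a) \<times> ('g \<Rightarrow> 'a) \<Rightarrow> int" where
  "Qf s = (\<lambda>p. \<Sum>g\<in>Gm. (single (mul s (dl g), Bg g) p - single (dl g, mul (Bg g) s) p))"

lemma Q_add: assumes s1: "s1 \<in> car" and s2: "s2 \<in> car"
  shows "(\<lambda>p. Qf (\<lambda>j. s1 j + s2 j) p - Qf s1 p - Qf s2 p) \<in> TR"
proof -
  let ?A = "\<lambda>g p. single (add S (mul s1 (dl g)) (mul s2 (dl g)), Bg g) p - single (mul s1 (dl g), Bg g) p - single (mul s2 (dl g), Bg g) p"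
  let ?B = "\<lambda>g p. single (dl g, add S (mul (Bg g) s1) (mul (Bg g) s2)) p - single (dl g, mul (Bg g) s1) p - single (dl g, mul (Bg g) s2) p"
  have A: "?A g \<in> TR" if g: "g \<in> Gm" for g
    by (rule tensor_rel.tr_addl) (use mult_car s1 s2 dl_car[OF g] Bg_car[OF g] in simp_all)
  have B: "?B g \<in> TR" if g: "g \<in> Gm" for g
    by (rule tensor_rel.tr_addr) (use mult_car s1 s2 dl_car[OF g] Bg_car[OF g] in simp_all)
  have "(\<lambda>p. \<Sum>g\<in>Gm. ?A g p - ?B g p) \<in> TR" by (rule TR_sum, rule TR_diff, erule A, erule B)
  moreover have "(\<lambda>p. \<Sum>g\<in>Gm. ?A g p - ?B g p) = (\<lambda>p. Qf (\<lambda>j. s1 j + s2 j) p - Qf s1 p - Qf s2 p)"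
  proof
    fix p
    have "(\<Sum>g\<in>Gm. ?A g p - ?B g p) = (\<Sum>g\<in>Gm. (single (mul (\<lambda>j. s1 j + s2 j) (dl g), Bg g) p - single (dl g, mul (Bg g) (\<lambda>j. s1 j + s2 j)) p)
        - (single (mul s1 (dl g), Bg g) p - single (dl g, mul (Bg g) s1) p)
        - (single (mul s2 (dl g), Bg g) p - single (dl g, mul (Bg g) s2) p))"
      by (rule sum.cong[OF refl]) (simp add: distr_dl[OF s1 s2] distr_Bg[OF s1 s2])
    also have "\<dots> = Qf (\<lambda>j. s1 j + s2 j) p - Qf s1 p - Qf s2 p"
      unfolding Qf_def by (simp add: sum_subtractf)
    finally show "(\<Sum>g\<in>Gm. ?A g p - ?B g p) = Qf (\<lambda>j. s1 j + s2 j) p - Qf s1 p - Qf s2 p" .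
  qed
  ultimately show ?thesis by simp
qed

lemma Q_zero: "Qf (\<lambda>j. 0) \<in> TR"
proof -
  have z1: "mul (\<lambda>j. 0) (dl g) = (\<lambda>j. 0)" if g: "g \<in> Gm" for g
  proof (rule zero_fun_eq)
    show "mul (\<lambda>j. 0) (dl g) \<in> car" using mult_car car_zero dl_car[OF g] by blast
    fix j assume "j \<in> Gm" thus "mul (\<lambda>j. 0) (dl g) j = 0" using mul_dl_r[OF car_zero g] by simp
  qed (rule car_zero)
  have z2: "mul (Bg g) (\<lambda>j. 0) = (\<lambda>j. 0)" if g: "g \<in> Gm" for g
  proof (rule zero_fun_eq)
    show "mul (Bg g) (\<lambda>j. 0) \<in> car" using mult_car car_zero Bg_car[OF g] by blast
    fix j assume j: "j \<in> Gm"
    show "mul (Bg g) (\<lambda>j. 0) j = 0"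
      using mul_mon_l[OF car_zero gi_Gm[OF g] d_in[OF g] j] g unfolding Bg_def by (simp add: al_zero)
  qed (rule car_zero)
  show ?thesis unfolding Qf_def
    by (rule TR_sum, rule TR_diff) (simp_all add: z1 z2 TR_single0l TR_single0r Bg_car dl_car)
qed


lemma Q_mon: assumes k: "k \<in> Gm" and c: "c \<in> ideal_of u k" shows "Qf (mon k c) \<in> TR"
proof -
  let ?A1 = "{g \<in> Gm. tgt g = src k}" and ?A2 = "{h \<in> Gm. tgt h = tgt k}"
  let ?T1 = "\<lambda>g. single (mul (mon k c) (dl g), Bg g)"
  let ?T2 = "\<lambda>g. single (dl g, mul (Bg g) (mon k c))"
  let ?Z = "\<lambda>g. single (dl (cmp k g), mon (gi g) (a * u (src g) * \<alpha> (gi (cmp k g)) c))"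
  have C1: "(\<lambda>p. (\<Sum>g\<in>Gm. ?T1 g p) - (\<Sum>g\<in>?A1. ?Z g p)) \<in> TR"
  proof -
    have "(\<lambda>p. \<Sum>g\<in>Gm. ?T1 g p - (if tgt g = src k then ?Z g p else 0)) \<in> TR"
    proof (rule TR_sum)
      fix g assume g: "g \<in> Gm"
      show "(\<lambda>p. ?T1 g p - (if tgt g = src k then ?Z g p else 0)) \<in> TR"
      proof (cases "tgt g = src k")
        case True
        let ?h = "cmp k g"
        have h: "?h \<in> Gm" using k g True by simp
        have ch: "c \<in> ideal_of u ?h" using c k g True by (simp add: mem_I)
        let ?c' = "\<alpha> (gi ?h) c"
        have c': "?c' \<in> ideal_of u (gi ?h)" using al_in[of "gi ?h" c] h ch by simp
        have e1: "mul (mon k c) (dl g) = mul (dl ?h) (emb ?c')"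
          using P_mon_dl[OF k c g] P_dl_emb[OF h c'] al_inv[OF h ch] True by simp
        have e2: "mon (gi g) (a * u (src g) * ?c') = mul (emb ?c') (Bg g)"
        proof -
          have "a * u (src g) * ?c' = ?c' * (a * u (src g))"
            using central_comm[OF ac] u_central[of "src g"] g by (metis mult.assoc src_Gm)
          thus ?thesis using P_emb_Bg[OF g] by simp
        qed
        have "(\<lambda>p. single (dl ?h \<otimes>\<^bsub>S\<^esub> emb ?c', Bg g) p - single (dl ?h, emb ?c' \<otimes>\<^bsub>S\<^esub> Bg g) p) \<in> TR"
          by (rule tensor_rel.tr_bal) (use dl_car[OF h] Bg_car[OF g] in auto)
        hence "(\<lambda>p. single (mul (dl ?h) (emb ?c'), Bg g) p - single (dl ?h, mul (emb ?c') (Bg g)) p) \<in> TR"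
          by simp
        thus ?thesis using True e1 e2 by simp
      next
        case False
        hence "mul (mon k c) (dl g) = (\<lambda>j. 0)" using P_mon_dl[OF k c g] by simp
        thus ?thesis using False TR_single0l[OF Bg_car[OF g]] by simp
      qed
    qed
    moreover have "(\<lambda>p. \<Sum>g\<in>Gm. ?T1 g p - (if tgt g = src k then ?Z g p else 0)) = (\<lambda>p. (\<Sum>g\<in>Gm. ?T1 g p) - (\<Sum>g\<in>?A1. ?Z g p))"
      by (simp add: sum_subtractf sum.inter_filter[OF fG])
    ultimately show ?thesis by simp
  qed
  have C2: "(\<lambda>p. (\<Sum>g\<in>Gm. ?T2 g p) - (\<Sum>g\<in>?A2. ?T2 g p)) \<in> TR"
  proof -
    have "(\<lambda>p. \<Sum>g\<in>Gm. ?T2 g p - (if tgt g = tgt k then ?T2 g p else 0)) \<in> TR"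
    proof (rule TR_sum)
      fix g assume g: "g \<in> Gm"
      show "(\<lambda>p. ?T2 g p - (if tgt g = tgt k then ?T2 g p else 0)) \<in> TR"
      proof (cases "tgt g = tgt k")
        case True thus ?thesis using tensor_rel.tr_zero by simp
      next
        case False
        hence "mul (Bg g) (mon k c) = (\<lambda>j. 0)" using P_Bg_mono[OF g k c] by auto
        thus ?thesis using False TR_single0r[OF dl_car[OF g]] by simp
      qed
    qed
    moreover have "(\<lambda>p. \<Sum>g\<in>Gm. ?T2 g p - (if tgt g = tgt k then ?T2 g p else 0)) = (\<lambda>p. (\<Sum>g\<in>Gm. ?T2 g p) - (\<Sum>g\<in>?A2. ?T2 g p))"
      by (simp add: sum_subtractf sum.inter_filter[OF fG])
    ultimately show ?thesis by simp
  qed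
  have C3: "(\<Sum>g\<in>?A1. ?Z g p) = (\<Sum>h\<in>?A2. ?T2 h p)" for p
  proof (rule sum.reindex_bij_witness[of _ "\<lambda>h. cmp (gi k) h" "\<lambda>g. cmp k g"])
    fix g assume g: "g \<in> ?A1"
    have g1: "g \<in> Gm" "tgt g = src k" using g by auto
    show "cmp (gi k) (cmp k g) = g"
    proof -
      have "cmp (gi k) (cmp k g) = cmp (cmp (gi k) k) g" using cmp_assoc[of "gi k" k g] k g1 by simp
      also have "\<dots> = g" using cmp_gi_l[OF k] g1 cmp_tgt[of g] by simp
      finally show ?thesis .
    qed
    show "cmp k g \<in> ?A2" using k g1 by simp
    let ?h = "cmp k g"
    have h: "?h \<in> Gm" "tgt ?h = tgt k" using k g1 by simp_all
    have gih: "cmp (gi ?h) k = gi g"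
    proof -
      have "cmp (gi ?h) k = cmp (cmp (gi g) (gi k)) k" using gi_cmp[of k g] k g1 by simp
      also have "\<dots> = cmp (gi g) (cmp (gi k) k)" using cmp_assoc[of "gi g" "gi k" k] k g1 by simp
      also have "\<dots> = gi g" using cmp_gi_l[OF k] g1 cmp_src[of "gi g"] by simp
      finally show ?thesis .
    qed
    have sh: "src ?h = src g" using k g1 by simp
    show "?T2 ?h p = ?Z g p" using P_Bg_mono[OF h(1) k c] h(2) gih sh by simp
  next
    fix h assume h: "h \<in> ?A2"
    have h1: "h \<in> Gm" "tgt h = tgt k" using h by auto
    show "cmp k (cmp (gi k) h) = h"
    proof -
      have "cmp k (cmp (gi k) h) = cmp (cmp k (gi k)) h" using cmp_assoc[of k "gi k" h] k h1 by simp
      also have "\<dots> = h" using cmp_gi_r[OF k] h1 cmp_tgt[of h] by simp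
      finally show ?thesis .
    qed
    show "cmp (gi k) h \<in> ?A1" using k h1 by simp
  qed
  have "(\<lambda>p. (\<Sum>g\<in>Gm. ?T1 g p) - (\<Sum>g\<in>Gm. ?T2 g p)) \<in> TR"
    by (rule TR_trans[OF C1]) (use C2 C3 in simp)
  moreover have "Qf (mon k c) = (\<lambda>p. (\<Sum>g\<in>Gm. ?T1 g p) - (\<Sum>g\<in>Gm. ?T2 g p))"
    unfolding Qf_def by (simp add: sum_subtractf)
  ultimately show ?thesis by simp
qed


lemma Q_all: assumes s: "s \<in> car" shows "Qf s \<in> TR"
proof -
  have part: "Qf (\<lambda>j. \<Sum>k\<in>K. mon k (s k) j) \<in> TR \<and> (\<lambda>j. \<Sum>k\<in>K. mon k (s k) j) \<in> car" if K: "K \<subseteq> Gm" for K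
  proof -
    have fK: "finite K" using K fG finite_subset by blast
    show ?thesis using fK K
    proof (induction K rule: finite_subset_induct)
      case empty
      show ?case using Q_zero car_zero by simp
    next
      case (insert k K)
      have mk: "mon k (s k) \<in> car" using mon_car insert(2) carD(3)[OF s] by blast
      have e: "(\<lambda>j. \<Sum>k\<in>insert k K. mon k (s k) j) = (\<lambda>j. mon k (s k) j + (\<Sum>k\<in>K. mon k (s k) j))"
        using insert(1,3) by simp
      have qm: "Qf (mon k (s k)) \<in> TR" using Q_mon insert(2) carD(3)[OF s] by blast
      have qa: "(\<lambda>p. Qf (\<lambda>j. mon k (s k) j + (\<Sum>k\<in>K. mon k (s k) j)) p - Qf (mon k (s k)) p - Qf (\<lambda>j. \<Sum>k\<in>K. mon k (s k) j) p) \<in> TR"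
        using Q_add[OF mk] insert(4) by blast
      have "(\<lambda>p. (Qf (\<lambda>j. mon k (s k) j + (\<Sum>k\<in>K. mon k (s k) j)) p - Qf (mon k (s k)) p - Qf (\<lambda>j. \<Sum>k\<in>K. mon k (s k) j) p)
              + (Qf (mon k (s k)) p + Qf (\<lambda>j. \<Sum>k\<in>K. mon k (s k) j) p)) \<in> TR"
        using tensor_rel.tr_add[OF qa tensor_rel.tr_add[OF qm conjunct1[OF insert(4)]]] by simp
      hence "Qf (\<lambda>j. mon k (s k) j + (\<Sum>k\<in>K. mon k (s k) j)) \<in> TR" by simp
      moreover have "(\<lambda>j. mon k (s k) j + (\<Sum>k\<in>K. mon k (s k) j)) \<in> car"
        using car_add[OF mk conjunct2[OF insert(4)]] .
      ultimately show ?case unfolding e by simp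
    qed
  qed
  have "(\<lambda>j. \<Sum>k\<in>Gm. mon k (s k) j) = s"
  proof
    fix j
    have "(\<Sum>k\<in>Gm. mon k (s k) j) = (if j \<in> Gm then s j else 0)"
      unfolding mon_def by (simp add: sum.delta'[OF fG])
    thus "(\<Sum>k\<in>Gm. mon k (s k) j) = s j" using carD(2)[OF s] by auto
  qed
  thus ?thesis using part[of Gm] by simp
qed

lemma bwd: "separable_extension S R"
  unfolding separable_extension_def
proof (intro bexI conjI ballI)
  show "xx \<in> formal_sums S" by (rule xx_fs)
  show "tensor_mult S xx = \<one>\<^bsub>S\<^esub>" by (rule xx_one)
  fix s assume s: "s \<in> carrier S"
  have e1: "fs_map (\<lambda>(a, b). (s \<otimes>\<^bsub>S\<^esub> a, b)) xx = (\<lambda>p. \<Sum>g\<in>Gm. single (mul s (dl g), Bg g) p)"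
    unfolding xx_def by (simp add: fs_map_sum_single[OF fG])
  have e2: "fs_map (\<lambda>(a, b). (a, b \<otimes>\<^bsub>S\<^esub> s)) xx = (\<lambda>p. \<Sum>g\<in>Gm. single (dl g, mul (Bg g) s) p)"
    unfolding xx_def by (simp add: fs_map_sum_single[OF fG])
  have "Qf s \<in> TR" using Q_all s by simp
  moreover have "Qf s = (\<lambda>p. fs_map (\<lambda>(a, b). (s \<otimes>\<^bsub>S\<^esub> a, b)) xx p - fs_map (\<lambda>(a, b). (a, b \<otimes>\<^bsub>S\<^esub> s)) xx p)"
    unfolding e1 e2 Qf_def by (simp add: sum_subtractf)
  ultimately show "(\<lambda>p. fs_map (\<lambda>(a, b). (s \<otimes>\<^bsub>S\<^esub> a, b)) xx p - fs_map (\<lambda>(a, b). (a, b \<otimes>\<^bsub>S\<^esub> s)) xx p) \<in> TR"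
    by simp
qed

end

lemma main: "separable_extension S R \<longleftrightarrow> (finite Gm \<and> (\<exists>a. central a \<and> (\<forall>e\<in>G0. trace_map Gm G0 src tgt gi u \<alpha> e a = u e)))"
  using forward bwd by blast

end

theorem corollary4p2:
  fixes Gm G0 :: "'g set"
    and src tgt gi :: "'g \<Rightarrow> 'g"
    and cmp :: "'g \<Rightarrow> 'g \<Rightarrow> 'g"
    and u :: "'g \<Rightarrow> 'a::ring_1"
    and \<alpha> :: "'g \<Rightarrow> 'a \<Rightarrow> 'a"
  assumes "groupoid Gm G0 src tgt cmp gi"
    and "groupoid_connected Gm G0 src tgt"
    and "finite G0"
    and "unital_global_action Gm G0 src tgt cmp gi u \<alpha>"
    and "(\<Sum>e\<in>G0. u e) = 1"
    and "\<forall>e\<in>G0. \<forall>f\<in>G0. e \<noteq> f \<longrightarrow> u e * u f = 0"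
    and "\<forall>e\<in>G0. u e \<noteq> 0"
  shows "separable_extension (skew_groupoid_ring Gm G0 src tgt cmp gi u \<alpha>)
                             (skew_embed G0 u ` UNIV)
         \<longleftrightarrow> (finite Gm \<and>
              (\<exists>a. central a \<and> (\<forall>e\<in>G0. trace_map Gm G0 src tgt gi u \<alpha> e a = u e)))"
proof -
  interpret setting Gm G0 src tgt gi cmp u \<alpha> by (unfold_locales) (use assms in auto)
  show ?thesis by (rule main)
qed

end
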